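(* Let $\mathcal{G}$ be a GBS graph of groups and $w=a_0^{k_0}y_1a_1^{k_1}\cdots y_na_n^{k_n}$ a $\mathcal{G}$-factorization, with the alphabet $\Sigma_w$, its involution, $\Lambda_w$ and the words $\mathcal{C}(w_{i,j})$ as defined in the context. Then for all $0\le i\le j\le n$: $w_{i,j}$ represents an element of $\langle a_i\rangle\le F(\mathcal{G})$ if and only if $\mathcal{C}(w_{i,j})=1$ in the free group $F_{\Lambda_w}$.
   Context: $\mathcal{G}$: finite connected graph $Y$ (vertices $V(Y)$, edges $E(Y)$, maps $\iota,\tau$, fixed-point-free involution $y\mapsto\bar y$ with $\iota(\bar y)=\tau(y)$) and integers $\alpha_y,\beta_y\ne0$ with $\alpha_y=\beta_{\bar y}$; $F(\mathcal{G})$ has generators $V(Y)\cup E(Y)$ and relations $\bar yy=1$, $y\,b^{\beta_y}\bar y=a^{\alpha_y}$ ($a=\iota(y)$, $b=\tau(y)$). A $\mathcal{G}$-factorization is a word $a_0^{k_0}y_1a_1^{k_1}\cdots y_na_n^{k_n}$ with $\iota(y_i)=a_{i-1}$, $\tau(y_i)=a_i$, $a_n=a_0$, $k_i\in\mathbb{Z}$. For $0\le i\le j\le n$: $w_{i,j}=a_i^{k_i}y_{i+1}\cdots y_ja_j^{k_j}$, $k_{i,j}=\sum_{\nu=i}^{j}k_\nu\prod_{\mu=i+1}^{\nu}\alpha_{y_\mu}/\beta_{y_\mu}\in\mathbb{Q}$. Fix an orientation $D\subseteq E(Y)$ and let $\rho$ map words additively to $\mathbb{Z}^D$ via $\rho(a^k)=0$,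 $\rho(y)=e_y$, $\rho(\bar y)=-e_y$ ($y\in D$). On $\{1,\dots,n\}$ let $i\sim_{\mathcal{C}}j$ iff $y_i=\bar y_j$ and, for $i<j$, $\rho(w_{i,j-1})=0$ and $k_{i,j-1}\in\beta_{y_i}\mathbb{Z}$ (symmetrically for $j<i$); let $i\approx j$ iff $i=j$ or $i\sim_{\mathcal{C}}\ell\sim_{\mathcal{C}}j$ for some $\ell$ (an equivalence relation). $\Sigma_w$ is the set of $\approx$-classes $[i]$, enlarged as follows: for each class $[i]$, $\overline{[i]}:=[j]$ if $i\sim_{\mathcal{C}}j$ for some $j$ (this is well defined), and otherwise $\overline{[i]}$ is a new element added to $\Sigma_w$; this gives a fixed-point-free involution on $\Sigma_w$. $\Lambda_w\subseteq\Sigma_w$ contains exactly one element of each pair $\{x,\bar x\}$, and $F_{\Lambda_w}$ is the free group on $\Lambda_w$ with $\bar x=x^{-1}$. Finally $\mathcal{C}(w_{i,j})=[i+1][i+2]\cdots[j]\in\Sigma_w^*$ and $\mathcal{C}(w)=[1]\cdots[n]$. *)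

theory Defs
  imports Complex_Main
begin

text \<open>Words over generators of type 'g: a letter (g, True) is g, (g, False) is g^-1.
  pres_eq R u v: u and v represent the same element of the group
  generated by 'g with relators R (i.e. equality modulo the normal closure of R
  in the free group). With R = {} this is equality in the free group.\<close>

inductive pres_eq :: "('g \<times> bool) list set \<Rightarrow> ('g \<times> bool) list \<Rightarrow> ('g \<times> bool) list \<Rightarrow> bool"
  for R where
  pe_refl: "pres_eq R u u"
| pe_sym: "pres_eq R u v \<Longrightarrow> pres_eq R v u"
| pe_trans: "pres_eq R u v \<Longrightarrow> pres_eq R v w \<Longrightarrow> pres_eq R u w"
| pe_cancel: "pres_eq R (u @ [(x, b), (x, \<not> b)] @ v) (u @ v)"
| pe_rel: "r \<in> R \<Longrightarrow> pres_eq R (u @ r @ v) (u @ v)"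

definition gpow :: "'g \<Rightarrow> int \<Rightarrow> ('g \<times> bool) list" where
  "gpow g m = replicate (nat \<bar>m\<bar>) (g, m \<ge> 0)"

definition gbs_graph ::
  "'v set \<Rightarrow> 'e set \<Rightarrow> ('e \<Rightarrow> 'v) \<Rightarrow> ('e \<Rightarrow> 'v) \<Rightarrow> ('e \<Rightarrow> 'e) \<Rightarrow> ('e \<Rightarrow> int) \<Rightarrow> ('e \<Rightarrow> int) \<Rightarrow> bool"
  where
  "gbs_graph V E \<iota> \<tau> ebar \<alpha> \<beta> \<longleftrightarrow>
     finite V \<and> finite E \<and> V \<noteq> {} \<and>
     (\<forall>y\<in>E. \<iota> y \<in> V \<and> \<tau> y \<in> V \<and> ebar y \<in> E \<and> ebar y \<noteq> y \<and> ebar (ebar y) = y \<and>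
              \<iota> (ebar y) = \<tau> y \<and> \<alpha> y \<noteq> 0 \<and> \<beta> y \<noteq> 0 \<and> \<alpha> y = \<beta> (ebar y)) \<and>
     (\<forall>u\<in>V. \<forall>v\<in>V. (u, v) \<in> {(\<iota> y, \<tau> y) | y. y \<in> E}\<^sup>*)"

text \<open>Relators of F(G): generators are Inl a (vertices) and Inr y (edges).\<close>
definition gbs_relators ::
  "'e set \<Rightarrow> ('e \<Rightarrow> 'v) \<Rightarrow> ('e \<Rightarrow> 'v) \<Rightarrow> ('e \<Rightarrow> 'e) \<Rightarrow> ('e \<Rightarrow> int) \<Rightarrow> ('e \<Rightarrow> int)
     \<Rightarrow> (('v + 'e) \<times> bool) list set" where
  "gbs_relators E \<iota> \<tau> ebar \<alpha> \<beta> =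
     {[(Inr (ebar y), True), (Inr y, True)] | y. y \<in> E} \<union>
     {[(Inr y, True)] @ gpow (Inl (\<tau> y)) (\<beta> y) @ [(Inr (ebar y), True)] @ gpow (Inl (\<iota> y)) (- \<alpha> y)
       | y. y \<in> E}"

text \<open>G-factorization a_0^{k_0} y_1 a_1^{k_1} ... y_n a_n^{k_n}.\<close>
definition gbs_factorization ::
  "'v set \<Rightarrow> 'e set \<Rightarrow> ('e \<Rightarrow> 'v) \<Rightarrow> ('e \<Rightarrow> 'v) \<Rightarrow> nat \<Rightarrow> (nat \<Rightarrow> 'v) \<Rightarrow> (nat \<Rightarrow> 'e) \<Rightarrow> bool" where
  "gbs_factorization V E \<iota> \<tau> n a y \<longleftrightarrow>
     (\<forall>i\<le>n. a i \<in> V) \<and>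
     (\<forall>i\<in>{1..n}. y i \<in> E \<and> \<iota> (y i) = a (i - 1) \<and> \<tau> (y i) = a i) \<and> a n = a 0"

definition wword :: "(nat \<Rightarrow> 'v) \<Rightarrow> (nat \<Rightarrow> 'e) \<Rightarrow> (nat \<Rightarrow> int) \<Rightarrow> nat \<Rightarrow> nat \<Rightarrow> (('v + 'e) \<times> bool) list" where
  "wword a y k i j = gpow (Inl (a i)) (k i) @
     concat (map (\<lambda>\<nu>. [(Inr (y \<nu>), True)] @ gpow (Inl (a \<nu>)) (k \<nu>)) [Suc i..<Suc j])"

definition kq :: "('e \<Rightarrow> int) \<Rightarrow> ('e \<Rightarrow> int) \<Rightarrow> (nat \<Rightarrow> 'e) \<Rightarrow> (nat \<Rightarrow> int) \<Rightarrow> nat \<Rightarrow> nat \<Rightarrow> rat" where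
  "kq \<alpha> \<beta> y k i j = (\<Sum>\<nu>=i..j. of_int (k \<nu>) *
       (\<Prod>\<mu>\<in>{i+1..\<nu>}. of_int (\<alpha> (y \<mu>)) / of_int (\<beta> (y \<mu>))))"

definition orientation :: "'e set \<Rightarrow> ('e \<Rightarrow> 'e) \<Rightarrow> 'e set \<Rightarrow> bool" where
  "orientation E ebar D \<longleftrightarrow> D \<subseteq> E \<and> (\<forall>y\<in>E. (y \<in> D) \<noteq> (ebar y \<in> D))"

text \<open>rho(w_{i,j}) \<in> Z^D, as a function on D.\<close>
definition rho :: "('e \<Rightarrow> 'e) \<Rightarrow> (nat \<Rightarrow> 'e) \<Rightarrow> nat \<Rightarrow> nat \<Rightarrow> 'e \<Rightarrow> int" where
  "rho ebar y i j d = (\<Sum>\<nu>\<in>{i+1..j}. (if y \<nu> = d then 1 else 0) - (if y \<nu> = ebar d then 1 else 0))"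

definition simC_cond ::
  "('e \<Rightarrow> 'e) \<Rightarrow> ('e \<Rightarrow> int) \<Rightarrow> ('e \<Rightarrow> int) \<Rightarrow> 'e set \<Rightarrow> (nat \<Rightarrow> 'e) \<Rightarrow> (nat \<Rightarrow> int) \<Rightarrow> nat \<Rightarrow> nat \<Rightarrow> bool" where
  "simC_cond ebar \<alpha> \<beta> D y k i j \<longleftrightarrow>
     (\<forall>d\<in>D. rho ebar y i (j - 1) d = 0) \<and>
     (\<exists>m::int. kq \<alpha> \<beta> y k i (j - 1) = of_int (\<beta> (y i)) * of_int m)"

definition simC ::
  "nat \<Rightarrow> ('e \<Rightarrow> 'e) \<Rightarrow> ('e \<Rightarrow> int) \<Rightarrow> ('e \<Rightarrow> int) \<Rightarrow> 'e set \<Rightarrow> (nat \<Rightarrow> 'e) \<Rightarrow> (nat \<Rightarrow> int) \<Rightarrow> nat \<Rightarrow> nat \<Rightarrow> bool" where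
  "simC n ebar \<alpha> \<beta> D y k i j \<longleftrightarrow>
     i \<in> {1..n} \<and> j \<in> {1..n} \<and> y i = ebar (y j) \<and>
     ((i < j \<and> simC_cond ebar \<alpha> \<beta> D y k i j) \<or> (j < i \<and> simC_cond ebar \<alpha> \<beta> D y k j i))"

definition approx ::
  "nat \<Rightarrow> ('e \<Rightarrow> 'e) \<Rightarrow> ('e \<Rightarrow> int) \<Rightarrow> ('e \<Rightarrow> int) \<Rightarrow> 'e set \<Rightarrow> (nat \<Rightarrow> 'e) \<Rightarrow> (nat \<Rightarrow> int) \<Rightarrow> nat \<Rightarrow> nat \<Rightarrow> bool" where
  "approx n ebar \<alpha> \<beta> D y k i j \<longleftrightarrow>
     i \<in> {1..n} \<and> j \<in> {1..n} \<and>
     (i = j \<or> (\<exists>l. simC n ebar \<alpha> \<beta> D y k i l \<and> simC n ebar \<alpha> \<beta> D y k l j))"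

definition cls ::
  "nat \<Rightarrow> ('e \<Rightarrow> 'e) \<Rightarrow> ('e \<Rightarrow> int) \<Rightarrow> ('e \<Rightarrow> int) \<Rightarrow> 'e set \<Rightarrow> (nat \<Rightarrow> 'e) \<Rightarrow> (nat \<Rightarrow> int) \<Rightarrow> nat \<Rightarrow> nat set" where
  "cls n ebar \<alpha> \<beta> D y k i = {j. approx n ebar \<alpha> \<beta> D y k i j}"

text \<open>Alphabet Sigma_w: (C, False) is the class C itself; (C, True) is the newly added
  formal element bar C for a class C without a ~C-partner.\<close>
definition Sigma_w ::
  "nat \<Rightarrow> ('e \<Rightarrow> 'e) \<Rightarrow> ('e \<Rightarrow> int) \<Rightarrow> ('e \<Rightarrow> int) \<Rightarrow> 'e set \<Rightarrow> (nat \<Rightarrow> 'e) \<Rightarrow> (nat \<Rightarrow> int) \<Rightarrow> (nat set \<times> bool) set" where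
  "Sigma_w n ebar \<alpha> \<beta> D y k =
     {(cls n ebar \<alpha> \<beta> D y k \<nu>, False) | \<nu>. \<nu> \<in> {1..n}} \<union>
     {(cls n ebar \<alpha> \<beta> D y k \<nu>, True) | \<nu>. \<nu> \<in> {1..n} \<and> \<not> (\<exists>j. simC n ebar \<alpha> \<beta> D y k \<nu> j)}"

definition sbar ::
  "nat \<Rightarrow> ('e \<Rightarrow> 'e) \<Rightarrow> ('e \<Rightarrow> int) \<Rightarrow> ('e \<Rightarrow> int) \<Rightarrow> 'e set \<Rightarrow> (nat \<Rightarrow> 'e) \<Rightarrow> (nat \<Rightarrow> int) \<Rightarrow> nat set \<times> bool \<Rightarrow> nat set \<times> bool" where
  "sbar n ebar \<alpha> \<beta> D y k x =
     (if snd x then (fst x, False)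
      else if (\<exists>i\<in>fst x. \<exists>j. simC n ebar \<alpha> \<beta> D y k i j)
        then (cls n ebar \<alpha> \<beta> D y k (SOME j. \<exists>i\<in>fst x. simC n ebar \<alpha> \<beta> D y k i j), False)
        else (fst x, True))"

definition Lambda_ok ::
  "nat \<Rightarrow> ('e \<Rightarrow> 'e) \<Rightarrow> ('e \<Rightarrow> int) \<Rightarrow> ('e \<Rightarrow> int) \<Rightarrow> 'e set \<Rightarrow> (nat \<Rightarrow> 'e) \<Rightarrow> (nat \<Rightarrow> int) \<Rightarrow> (nat set \<times> bool) set \<Rightarrow> bool" where
  "Lambda_ok n ebar \<alpha> \<beta> D y k \<Lambda> \<longleftrightarrow>
     \<Lambda> \<subseteq> Sigma_w n ebar \<alpha> \<beta> D y k \<and>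
     (\<forall>x\<in>Sigma_w n ebar \<alpha> \<beta> D y k. (x \<in> \<Lambda>) \<noteq> (sbar n ebar \<alpha> \<beta> D y k x \<in> \<Lambda>))"

text \<open>Image of a letter of Sigma_w in the free group on Lambda (bar x = x^-1).\<close>
definition toF ::
  "nat \<Rightarrow> ('e \<Rightarrow> 'e) \<Rightarrow> ('e \<Rightarrow> int) \<Rightarrow> ('e \<Rightarrow> int) \<Rightarrow> 'e set \<Rightarrow> (nat \<Rightarrow> 'e) \<Rightarrow> (nat \<Rightarrow> int) \<Rightarrow> (nat set \<times> bool) set
     \<Rightarrow> nat set \<times> bool \<Rightarrow> (nat set \<times> bool) \<times> bool" where
  "toF n ebar \<alpha> \<beta> D y k \<Lambda> x =
     (if x \<in> \<Lambda> then (x, True) else (sbar n ebar \<alpha> \<beta> D y k x, False))"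

definition Cword ::
  "nat \<Rightarrow> ('e \<Rightarrow> 'e) \<Rightarrow> ('e \<Rightarrow> int) \<Rightarrow> ('e \<Rightarrow> int) \<Rightarrow> 'e set \<Rightarrow> (nat \<Rightarrow> 'e) \<Rightarrow> (nat \<Rightarrow> int) \<Rightarrow> nat \<Rightarrow> nat \<Rightarrow> (nat set \<times> bool) list" where
  "Cword n ebar \<alpha> \<beta> D y k i j = map (\<lambda>\<nu>. (cls n ebar \<alpha> \<beta> D y k \<nu>, False)) [Suc i..<Suc j]"

end

theory Submission
  imports Defs
begin

section \<open>Generic pres_eq algebra\<close>

lemma pe_cong: "pres_eq R u v \<Longrightarrow> pres_eq R (x @ u @ z) (x @ v @ z)"
proof (induction rule: pres_eq.induct)
  case (pe_refl u) then show ?case by (rule pres_eq.pe_refl)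
next
  case (pe_sym u v) then show ?case by (simp add: pres_eq.pe_sym)
next
  case (pe_trans u v w) then show ?case by (metis pres_eq.pe_trans)
next
  case (pe_cancel u c b v)
  have "pres_eq R ((x @ u) @ [(c, b), (c, \<not> b)] @ (v @ z)) ((x @ u) @ (v @ z))"
    by (rule pres_eq.pe_cancel)
  then show ?case by simp
next
  case (pe_rel r u v)
  have "pres_eq R ((x @ u) @ r @ (v @ z)) ((x @ u) @ (v @ z))"
    by (rule pres_eq.pe_rel[OF pe_rel])
  then show ?case by simp
qed

lemma pe_congL: "pres_eq R u v \<Longrightarrow> pres_eq R (x @ u) (x @ v)"
  using pe_cong[of R u v x "[]"] by simp

lemma pe_congR: "pres_eq R u v \<Longrightarrow> pres_eq R (u @ z) (v @ z)"
  using pe_cong[of R u v "[]" z] by simp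

lemma pe_app: "pres_eq R u v \<Longrightarrow> pres_eq R u' v' \<Longrightarrow> pres_eq R (u @ u') (v @ v')"
  by (meson pe_congL pe_congR pres_eq.pe_trans)

lemma pe_del: "r \<in> R \<Longrightarrow> pres_eq R r []"
  using pres_eq.pe_rel[of r R "[]" "[]"] by simp

lemma pe_canc2: "pres_eq R [(c, b), (c, \<not> b)] []"
  using pres_eq.pe_cancel[of R "[]" c b "[]"] by simp

lemma gpow_pos: "m \<ge> 0 \<Longrightarrow> gpow g m = replicate (nat m) (g, True)"
  by (simp add: gpow_def)
lemma gpow_neg: "m < 0 \<Longrightarrow> gpow g m = replicate (nat (-m)) (g, False)"
  by (simp add: gpow_def)
lemma gpow_0[simp]: "gpow g 0 = []" by (simp add: gpow_def)

lemma gpow_succ_pos: "m \<ge> 0 \<Longrightarrow> gpow g (m + 1) = (g, True) # gpow g m"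
  by (simp add: gpow_def nat_add_distrib)
lemma gpow_pred_neg: "m \<le> 0 \<Longrightarrow> gpow g (m - 1) = (g, False) # gpow g m"
proof -
  assume "m \<le> 0"
  then have "nat \<bar>m - 1\<bar> = Suc (nat \<bar>m\<bar>)" by simp
  with \<open>m \<le> 0\<close> show ?thesis by (simp add: gpow_def)
qed

lemma gpow_cons_T: "pres_eq R ((g, True) # gpow g m) (gpow g (m + 1))"
proof (cases "m \<ge> 0")
  case True then show ?thesis by (simp add: gpow_succ_pos pres_eq.pe_refl)
next
  case False
  then have "gpow g m = (g, False) # gpow g (m + 1)"
    using gpow_pred_neg[of "m+1" g] by simp
  then show ?thesis using pres_eq.pe_cancel[of R "[]" g True "gpow g (m+1)"] by simp
qed

lemma gpow_cons_F: "pres_eq R ((g, False) # gpow g m) (gpow g (m - 1))"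
proof (cases "m \<le> 0")
  case True then show ?thesis by (simp add: gpow_pred_neg pres_eq.pe_refl)
next
  case False
  then have "gpow g m = (g, True) # gpow g (m - 1)"
    using gpow_succ_pos[of "m-1" g] by simp
  then show ?thesis using pres_eq.pe_cancel[of R "[]" g False "gpow g (m-1)"] by simp
qed

lemma gpow_add_nat: "pres_eq R (gpow g (int d) @ gpow g m) (gpow g (int d + m))"
proof (induction d arbitrary: m)
  case 0 then show ?case by (simp add: pres_eq.pe_refl)
next
  case (Suc d)
  have e: "gpow g (int (Suc d)) = (g, True) # gpow g (int d)"
    using gpow_succ_pos[of "int d" g] by (simp add: add.commute)
  have "pres_eq R ((g, True) # (gpow g (int d) @ gpow g m)) ((g, True) # gpow g (int d + m))"
    using pe_congL[OF Suc.IH, of "[(g,True)]"] by simp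
  moreover have "pres_eq R ((g, True) # gpow g (int d + m)) (gpow g (int d + m + 1))"
    by (rule gpow_cons_T)
  ultimately show ?case using e by (auto intro: pres_eq.pe_trans simp: algebra_simps)
qed

lemma gpow_add_negnat: "pres_eq R (gpow g (- int d) @ gpow g m) (gpow g (- int d + m))"
proof (induction d arbitrary: m)
  case 0 then show ?case by (simp add: pres_eq.pe_refl)
next
  case (Suc d)
  have e: "gpow g (- int (Suc d)) = (g, False) # gpow g (- int d)"
  proof -
    have "- int (Suc d) = - int d - 1" by simp
    then show ?thesis using gpow_pred_neg[of "- int d" g] by (simp only:)
  qed
  have "pres_eq R ((g, False) # (gpow g (- int d) @ gpow g m)) ((g, False) # gpow g (- int d + m))"
    using pe_congL[OF Suc.IH, of "[(g,False)]"] by simp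
  moreover have "pres_eq R ((g, False) # gpow g (- int d + m)) (gpow g (- int d + m - 1))"
    by (rule gpow_cons_F)
  ultimately show ?case using e by (auto intro: pres_eq.pe_trans simp: algebra_simps)
qed

lemma gpow_add: "pres_eq R (gpow g m @ gpow g m') (gpow g (m + m'))"
proof (cases "m \<ge> 0")
  case True
  then obtain d where "m = int d" by (metis nonneg_eq_int)
  then show ?thesis using gpow_add_nat by simp
next
  case False
  then obtain d where "m = - int d" by (metis linorder_not_le neg_int_cases less_le)
  then show ?thesis using gpow_add_negnat by simp
qed

section \<open>Free reduction\<close>

fun red_step :: "'x \<times> bool \<Rightarrow> ('x \<times> bool) list \<Rightarrow> ('x \<times> bool) list" where
  "red_step x [] = [x]"
| "red_step x (z # zs) = (if fst z = fst x \<and> snd z \<noteq> snd x then zs else x # z # zs)"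

fun rd :: "('x \<times> bool) list \<Rightarrow> bool" where
  "rd [] = True"
| "rd [x] = True"
| "rd (x # z # zs) = (\<not> (fst z = fst x \<and> snd z \<noteq> snd x) \<and> rd (z # zs))"

lemma rd_tl: "rd (z # zs) \<Longrightarrow> rd zs"
  by (cases zs) auto

lemma rd_step: "rd s \<Longrightarrow> rd (red_step x s)"
  by (cases s) (auto dest: rd_tl)

lemma rd_fold: "rd s \<Longrightarrow> rd (fold red_step u s)"
  by (induction u arbitrary: s) (auto simp: rd_step)

lemma red_pair: "rd s \<Longrightarrow> red_step (c, \<not> b) (red_step (c, b) s) = s"
proof (cases s)
  case Nil then show ?thesis by simp
next
  case (Cons z zs)
  assume r: "rd s"
  show ?thesis
  proof (cases "fst z = c \<and> snd z \<noteq> b")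
    case True
    then have z: "z = (c, \<not> b)" by (cases z) auto
    have "red_step (c, \<not> b) zs = (c, \<not> b) # zs"
      using r Cons z by (cases zs) auto
    then show ?thesis using Cons True z by simp
  next
    case False then show ?thesis using Cons by auto
  qed
qed

lemma fold_red_cancel: "rd s \<Longrightarrow>
   fold red_step (u @ [(c, b), (c, \<not> b)] @ v) s = fold red_step (u @ v) s"
proof -
  assume "rd s"
  then have "rd (fold red_step u s)" by (rule rd_fold)
  then show ?thesis using red_pair[of "fold red_step u s" c b] by simp
qed

lemma pres_eq_empty_fold: "pres_eq {} u v \<Longrightarrow> fold red_step u [] = fold red_step v []"
proof (induction rule: pres_eq.induct)
  case (pe_cancel u c b v)
  show ?case by (rule fold_red_cancel) simp
qed auto

lemma pres_eq_to_fold: "pres_eq R (rev s @ u) (rev (fold red_step u s))"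
proof (induction u arbitrary: s)
  case Nil then show ?case by (simp add: pres_eq.pe_refl)
next
  case (Cons x u)
  have "pres_eq R (rev s @ x # u) (rev (red_step x s) @ u)"
  proof (cases s)
    case Nil then show ?thesis by (simp add: pres_eq.pe_refl)
  next
    case (Cons z zs)
    show ?thesis
    proof (cases "fst z = fst x \<and> snd z \<noteq> snd x")
      case True
      then have "x = (fst z, \<not> snd z)" by (cases x) auto
      then have "rev s @ x # u = rev zs @ [(fst z, snd z), (fst z, \<not> snd z)] @ u"
        using Cons by simp
      then show ?thesis using Cons True pres_eq.pe_cancel[of R "rev zs" "fst z" "snd z" u] by simp
    next
      case False then show ?thesis using Cons by (auto simp add: pres_eq.pe_refl)
    qed
  qed
  then show ?case using Cons.IH[of "red_step x s"] by (auto intro: pres_eq.pe_trans)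
qed

lemma pres_eq_empty_iff: "pres_eq {} u [] \<longleftrightarrow> fold red_step u [] = []"
proof
  assume "pres_eq {} u []"
  then show "fold red_step u [] = []" using pres_eq_empty_fold by fastforce
next
  assume "fold red_step u [] = []"
  then show "pres_eq {} u []" using pres_eq_to_fold[of "{}" "[]" u] by simp
qed



locale gbsg =
  fixes V :: "'v set" and E :: "'e set" and \<iota> \<tau> :: "'e \<Rightarrow> 'v" and ebar :: "'e \<Rightarrow> 'e"
    and \<alpha> \<beta> :: "'e \<Rightarrow> int"
  assumes gbs: "gbs_graph V E \<iota> \<tau> ebar \<alpha> \<beta>"
begin

lemma ebarE: "e \<in> E \<Longrightarrow> ebar e \<in> E" using gbs by (auto simp: gbs_graph_def)
lemma ebar2[simp]: "e \<in> E \<Longrightarrow> ebar (ebar e) = e" using gbs by (auto simp: gbs_graph_def)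
lemma ebar_neq: "e \<in> E \<Longrightarrow> ebar e \<noteq> e" using gbs by (auto simp: gbs_graph_def)
lemma iota_bar: "e \<in> E \<Longrightarrow> \<iota> (ebar e) = \<tau> e" using gbs by (auto simp: gbs_graph_def)
lemma tau_bar: "e \<in> E \<Longrightarrow> \<tau> (ebar e) = \<iota> e"
  using iota_bar[of "ebar e"] ebarE by simp
lemma alpha_nz: "e \<in> E \<Longrightarrow> \<alpha> e \<noteq> 0" using gbs by (auto simp: gbs_graph_def)
lemma beta_nz: "e \<in> E \<Longrightarrow> \<beta> e \<noteq> 0" using gbs by (auto simp: gbs_graph_def)
lemma alpha_bar: "e \<in> E \<Longrightarrow> \<beta> (ebar e) = \<alpha> e" using gbs by (auto simp: gbs_graph_def)
lemma beta_bar: "e \<in> E \<Longrightarrow> \<alpha> (ebar e) = \<beta> e"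
  using alpha_bar[of "ebar e"] ebarE by simp

section \<open>Normal forms and the action\<close>

definition P :: "'e \<Rightarrow> 'v \<times> int \<times> ('e \<times> int) list \<Rightarrow> 'v \<times> int \<times> ('e \<times> int) list" where
  "P e x = (case x of (v, h, t) \<Rightarrow>
     (if h mod \<beta> e = 0 \<and> t \<noteq> [] \<and> fst (hd t) = ebar e
      then (\<iota> e, (h div \<beta> e) * \<alpha> e + snd (hd t), tl t)
      else (\<iota> e, (h div \<beta> e) * \<alpha> e, (e, h mod \<beta> e) # t)))"

fun vt :: "'v \<Rightarrow> ('e \<times> int) list \<Rightarrow> bool" where
  "vt v [] = True"
| "vt v ((e, c) # rest) = (e \<in> E \<and> \<iota> e = v \<and> c mod \<beta> e = c \<and> vt (\<tau> e) rest \<and>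
      (rest \<noteq> [] \<longrightarrow> \<not> (fst (hd rest) = ebar e \<and> c = 0)))"

definition valid :: "'v \<times> int \<times> ('e \<times> int) list \<Rightarrow> bool" where
  "valid x = (case x of (v, h, t) \<Rightarrow> vt v t)"

lemma divmod_rep: "(b::int) \<noteq> 0 \<Longrightarrow> c mod b = c \<Longrightarrow> (q * b + c) div b = q \<and> (q * b + c) mod b = c"
proof -
  assume b: "b \<noteq> 0" and c: "c mod b = c"
  have "c div b = 0"
  proof -
    have "c = c div b * b + c mod b" by simp
    with c have "c div b * b = 0" by linarith
    with b show ?thesis by simp
  qed
  then show ?thesis using b c by (simp add: add.commute)
qed

lemma P_eq: "P e (v, h, t) = (if h mod \<beta> e = 0 \<and> t \<noteq> [] \<and> fst (hd t) = ebar e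
      then (\<iota> e, (h div \<beta> e) * \<alpha> e + snd (hd t), tl t)
      else (\<iota> e, (h div \<beta> e) * \<alpha> e, (e, h mod \<beta> e) # t))"
  by (simp add: P_def)

lemma P_valid: "e \<in> E \<Longrightarrow> vt (\<tau> e) t \<Longrightarrow> valid (P e (\<tau> e, h, t))"
proof -
  assume e: "e \<in> E" and v: "vt (\<tau> e) t"
  show ?thesis
  proof (cases "h mod \<beta> e = 0 \<and> t \<noteq> [] \<and> fst (hd t) = ebar e")
    case True
    then obtain c t' where t: "t = (ebar e, c) # t'" by (cases t) auto
    then show ?thesis using v True e by (simp add: P_def valid_def tau_bar)
  next
    case False
    then have "P e (\<tau> e, h, t) = (\<iota> e, (h div \<beta> e) * \<alpha> e, (e, h mod \<beta> e) # t)"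
      unfolding P_eq by (rule if_not_P)
    then show ?thesis using v e False by (auto simp add: valid_def)
  qed
qed

lemma P_fst: "fst (P e x) = \<iota> e" by (simp add: P_def split: prod.splits)

lemma PP: assumes e: "e \<in> E" and v: "vt (\<tau> e) t"
  shows "P (ebar e) (P e (\<tau> e, h, t)) = (\<tau> e, h, t)"
proof (cases "h mod \<beta> e = 0 \<and> t \<noteq> [] \<and> fst (hd t) = ebar e")
  case True
  then obtain c t' where t: "t = (ebar e, c) # t'" by (cases t) auto
  have c: "c mod \<alpha> e = c" using v t e alpha_bar by auto
  have dm: "(h div \<beta> e * \<alpha> e + c) div \<alpha> e = h div \<beta> e" "(h div \<beta> e * \<alpha> e + c) mod \<alpha> e = c"
    using divmod_rep[OF alpha_nz[OF e] c] by blast+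
  have nc: "\<not> (c = 0 \<and> t' \<noteq> [] \<and> fst (hd t') = e)" using v t e by auto
  have h: "h div \<beta> e * \<beta> e = h" using True by (metis add.right_neutral mult_div_mod_eq mult.commute)
  have s1: "P e (\<tau> e, h, t) = (\<iota> e, h div \<beta> e * \<alpha> e + c, t')"
    using True t by (simp add: P_def)
  have s2: "P (ebar e) (\<iota> e, h div \<beta> e * \<alpha> e + c, t') = (\<iota> (ebar e), h div \<beta> e * \<alpha> (ebar e), (ebar e, c) # t')"
  proof -
    have "\<not> ((h div \<beta> e * \<alpha> e + c) mod \<beta> (ebar e) = 0 \<and> t' \<noteq> [] \<and> fst (hd t') = ebar (ebar e))"
      using nc dm e alpha_bar by simp
    then have "P (ebar e) (\<iota> e, h div \<beta> e * \<alpha> e + c, t') = (\<iota> (ebar e), (h div \<beta> e * \<alpha> e + c) div \<beta> (ebar e) * \<alpha> (ebar e), (ebar e, (h div \<beta> e * \<alpha> e + c) mod \<beta> (ebar e)) # t')"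
      unfolding P_eq by (rule if_not_P)
    then show ?thesis using dm e alpha_bar by simp
  qed
  show ?thesis using s1 s2 e h t by (simp add: iota_bar beta_bar)
next
  case False
  have dm: "(h div \<beta> e * \<alpha> e) div \<alpha> e = h div \<beta> e" "(h div \<beta> e * \<alpha> e) mod \<alpha> e = 0"
    using alpha_nz[OF e] by simp_all
  have h: "h div \<beta> e * \<beta> e + h mod \<beta> e = h" by simp
  have s1: "P e (\<tau> e, h, t) = (\<iota> e, h div \<beta> e * \<alpha> e, (e, h mod \<beta> e) # t)"
    unfolding P_eq using False by (rule if_not_P)
  have s2: "P (ebar e) (\<iota> e, h div \<beta> e * \<alpha> e, (e, h mod \<beta> e) # t) = (\<iota> (ebar e), h div \<beta> e * \<alpha> (ebar e) + h mod \<beta> e, t)"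
    unfolding P_def using dm e alpha_bar by simp
  show ?thesis using s1 s2 e h by (simp add: iota_bar beta_bar)
qed

lemma P_shift: assumes e: "e \<in> E"
  shows "P e (v, h + \<beta> e * m, t) = (case P e (v, h, t) of (v', h', t') \<Rightarrow> (v', h' + \<alpha> e * m, t'))"
proof -
  have d: "(h + \<beta> e * m) div \<beta> e = h div \<beta> e + m" using beta_nz[OF e]
    by (simp add: mult.commute)
  have r: "(h + \<beta> e * m) mod \<beta> e = h mod \<beta> e" by simp
  show ?thesis unfolding P_def by (simp only: d r prod.case) (simp add: algebra_simps)
qed

definition sig :: "'e \<Rightarrow> 'v \<times> int \<times> ('e \<times> int) list \<Rightarrow> 'v \<times> int \<times> ('e \<times> int) list" where
  "sig e x = (if e \<in> E then (if fst x = \<tau> e then P e x else if fst x = \<iota> e then P (ebar e) x else x) else x)"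

fun act :: "('v + 'e) \<times> bool \<Rightarrow> 'v \<times> int \<times> ('e \<times> int) list \<Rightarrow> 'v \<times> int \<times> ('e \<times> int) list" where
  "act (Inl a, b) (v, h, t) = (if v = a then (v, h + (if b then 1 else -1), t) else (v, h, t))"
| "act (Inr e, b) x = (if b then sig e x else if e \<in> E then sig (ebar e) x else x)"

definition actw :: "(('v + 'e) \<times> bool) list \<Rightarrow> 'v \<times> int \<times> ('e \<times> int) list \<Rightarrow> 'v \<times> int \<times> ('e \<times> int) list" where
  "actw u x = foldr act u x"

lemma actw_Nil[simp]: "actw [] x = x" by (simp add: actw_def)
lemma actw_Cons[simp]: "actw (g # u) x = act g (actw u x)" by (simp add: actw_def)
lemma actw_app[simp]: "actw (u @ w) x = actw u (actw w x)" by (simp add: actw_def)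

lemma sig_valid: "valid x \<Longrightarrow> valid (sig e x)"
proof -
  assume vx: "valid x"
  obtain v h t where x: "x = (v, h, t)" by (cases x) auto
  show ?thesis
  proof (cases "e \<in> E")
    case e: True
    show ?thesis
    proof (cases "v = \<tau> e")
      case True then show ?thesis using vx x e P_valid by (simp add: sig_def valid_def)
    next
      case False
      show ?thesis
      proof (cases "v = \<iota> e")
        case True
        then have vv: "v = \<tau> (ebar e)" using tau_bar e by simp
        have "sig e x = P (ebar e) (\<tau> (ebar e), h, t)" using x e False True vv by (simp add: sig_def)
        moreover have "vt (\<tau> (ebar e)) t" using vx x vv by (simp add: valid_def)
        ultimately show ?thesis using P_valid[of "ebar e" t h] ebarE[OF e] by simp
      qed (use False x vx in \<open>simp add: sig_def\<close>)
    qed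
  qed (use vx in \<open>simp add: sig_def\<close>)
qed

lemma act_valid: "valid x \<Longrightarrow> valid (act g x)"
proof (cases g)
  case (Pair c b)
  assume vx: "valid x"
  show ?thesis
  proof (cases c)
    case (Inl a) then show ?thesis using Pair vx by (cases x) (auto simp: valid_def)
  next
    case (Inr e) then show ?thesis using Pair vx by (auto simp: sig_valid)
  qed
qed

lemma actw_valid: "valid x \<Longrightarrow> valid (actw u x)"
  by (induction u) (auto simp: act_valid)

lemma sig_inv: assumes e: "e \<in> E" and vx: "valid x" shows "sig (ebar e) (sig e x) = x"
proof -
  obtain v h t where x: "x = (v, h, t)" by (cases x) auto
  have be: "ebar e \<in> E" using ebarE e by simp
  show ?thesis
  proof (cases "v = \<tau> e")
    case True
    have "vt (\<tau> e) t" using vx x True by (simp add: valid_def)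
    then show ?thesis using PP[OF e] True x e be P_fst[of e] by (simp add: sig_def tau_bar)
  next
    case False
    show ?thesis
    proof (cases "v = \<iota> e")
      case True
      have vt: "vt (\<tau> (ebar e)) t" using vx x True e by (simp add: valid_def tau_bar)
      have "P e (P (ebar e) x) = x" using PP[OF be vt, of h] True x e by (simp add: tau_bar)
      then show ?thesis using True False x e be P_fst[of "ebar e"] by (simp add: sig_def tau_bar iota_bar)
    next
      case False2: False
      then show ?thesis using False x e be by (simp add: sig_def tau_bar iota_bar)
    qed
  qed
qed

lemma act_cancel: "valid x \<Longrightarrow> act (c, b) (act (c, \<not> b) x) = x"
proof (cases c)
  case (Inl a) then show ?thesis by (cases x) auto
next
  case (Inr e)
  assume vx: "valid x"
  show ?thesis
  proof (cases "e \<in> E")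
    case True
    then show ?thesis using Inr sig_inv[OF True vx] sig_inv[OF ebarE[OF True], of "sig e x"]
      sig_valid[OF vx] sig_inv[OF ebarE[OF True] vx] by (cases b) auto
  next
    case False
    then show ?thesis using Inr by (simp add: sig_def)
  qed
qed

lemma actw_gpow: "actw (gpow (Inl a) m) (v, h, t) = (if v = a then (v, h + m, t) else (v, h, t))"
proof (cases "m \<ge> 0")
  case True
  obtain d where m: "m = int d" using True nonneg_eq_int by blast
  have "actw (replicate d (Inl a, True)) (v, h, t) = (if v = a then (v, h + int d, t) else (v, h, t))"
    by (induction d) auto
  then show ?thesis using m by (simp add: gpow_def)
next
  case False
  obtain d where m: "m = - int d" using False by (metis linorder_not_le neg_int_cases less_le)
  have dp: "d > 0" using m False by simp
  have "actw (replicate d (Inl a, False)) (v, h, t) = (if v = a then (v, h - int d, t) else (v, h, t))"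
    by (induction d) auto
  then show ?thesis using m dp by (simp add: gpow_def)
qed

lemma act_relator: assumes r: "r \<in> gbs_relators E \<iota> \<tau> ebar \<alpha> \<beta>" and vx: "valid x"
  shows "actw r x = x"
proof -
  from r consider (a) e where "e \<in> E" "r = [(Inr (ebar e), True), (Inr e, True)]"
    | (b) e where "e \<in> E" "r = [(Inr e, True)] @ gpow (Inl (\<tau> e)) (\<beta> e) @ [(Inr (ebar e), True)] @ gpow (Inl (\<iota> e)) (- \<alpha> e)"
    unfolding gbs_relators_def by blast
  then show ?thesis
  proof cases
    case a then show ?thesis using sig_inv vx by simp
  next
    case b
    note e = b(1)
    have be: "ebar e \<in> E" using ebarE e by simp
    obtain v h t where x: "x = (v, h, t)" by (cases x) auto
    have vt: "vt v t" using vx x by (simp add: valid_def)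
    show ?thesis
    proof (cases "v = \<iota> e")
      case True
      have vt': "vt (\<tau> (ebar e)) t" using vt True e by (simp add: tau_bar)
      obtain v1 h1 t1 where z: "P (ebar e) (\<iota> e, h, t) = (v1, h1, t1)" by (cases "P (ebar e) (\<iota> e, h, t)") auto
      have v1: "v1 = \<tau> e" using P_fst[of "ebar e" "(\<iota> e, h, t)"] z e by (simp add: iota_bar)
      have sh: "P (ebar e) (\<iota> e, h + \<beta> (ebar e) * (-1), t) = (v1, h1 + \<alpha> (ebar e) * (-1), t1)"
        using P_shift[OF be, of "\<iota> e" h "-1" t] z by simp
      have sh2: "P (ebar e) (\<iota> e, h - \<alpha> e, t) = (\<tau> e, h1 - \<beta> e, t1)"
        using sh e v1 by (simp add: alpha_bar beta_bar)
      have pp: "P e (\<tau> e, h1, t1) = (\<iota> e, h, t)"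
        using PP[OF be vt', of h] z v1 e by (simp add: tau_bar)
      have s1: "sig (ebar e) (\<iota> e, h - \<alpha> e, t) = (\<tau> e, h1 - \<beta> e, t1)"
        using sh2 be e by (simp add: sig_def tau_bar)
      have s2: "sig e (\<tau> e, h1, t1) = (\<iota> e, h, t)" using pp e by (simp add: sig_def)
      show ?thesis using b(2) x True s1 s2 by (simp add: actw_gpow)
    next
      case False
      show ?thesis
      proof (cases "v = \<tau> e")
        case True
        have vt': "vt (\<tau> e) t" using vt True by simp
        obtain v1 h1 t1 where z: "P e (\<tau> e, h, t) = (v1, h1, t1)" by (cases "P e (\<tau> e, h, t)") auto
        have v1: "v1 = \<iota> e" using P_fst[of e "(\<tau> e, h, t)"] z by simp
        have pp: "P (ebar e) (\<iota> e, h1, t1) = (\<tau> e, h, t)" using PP[OF e vt', of h] z v1 by simp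
        have s1: "sig (ebar e) (\<tau> e, h, t) = (\<iota> e, h1, t1)"
          using z v1 False True be e by (simp add: sig_def tau_bar iota_bar)
        have s2: "sig e (\<iota> e, h1, t1) = (\<tau> e, h, t)"
          using pp False True e by (simp add: sig_def)
        show ?thesis using b(2) x True False s1 s2 by (simp add: actw_gpow)
      next
        case False2: False
        show ?thesis using b(2) x False False2 e be by (simp add: actw_gpow sig_def tau_bar iota_bar)
      qed
    qed
  qed
qed

lemma actw_pres_eq: "pres_eq (gbs_relators E \<iota> \<tau> ebar \<alpha> \<beta>) u w \<Longrightarrow> valid x \<Longrightarrow> actw u x = actw w x"
proof (induction arbitrary: x rule: pres_eq.induct)
  case (pe_cancel u c b v)
  have "valid (actw v x)" using actw_valid pe_cancel by blast
  then show ?case using act_cancel[of "actw v x" c b] by simp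
next
  case (pe_rel r u v)
  have "valid (actw v x)" using actw_valid pe_rel by blast
  then show ?case using act_relator[OF pe_rel(1)] by simp
qed auto

section \<open>Britton-type lemma\<close>

definition sw :: "('e \<times> int) list \<Rightarrow> (('v + 'e) \<times> bool) list" where
  "sw L = concat (map (\<lambda>(e, c). [(Inr e, True)] @ gpow (Inl (\<tau> e)) c) L)"

fun redl :: "('e \<times> int) list \<Rightarrow> bool" where
  "redl [] = True"
| "redl [(e, c)] = (e \<in> E)"
| "redl ((e, c) # (e', c') # L) = (e \<in> E \<and> \<tau> e = \<iota> e' \<and> \<not> (e' = ebar e \<and> \<beta> e dvd c) \<and> redl ((e', c') # L))"

lemma britton_aux:
  assumes "redl L" "L \<noteq> []"
  shows "\<exists>H r rest. actw (sw L) (\<tau> (fst (last L)), 0, []) = (\<iota> (fst (hd L)), H, (fst (hd L), r) # rest)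
     \<and> \<alpha> (fst (hd L)) dvd H \<and> valid (actw (sw L) (\<tau> (fst (last L)), 0, []))"
  using assms
proof (induction L rule: redl.induct)
  case (2 e c)
  have e: "e \<in> E" using 2 by simp
  have v0: "vt (\<tau> e) []" by simp
  have "actw (sw [(e, c)]) (\<tau> e, 0, []) = P e (\<tau> e, c, [])"
    by (simp add: sw_def actw_gpow sig_def e)
  moreover have "valid (P e (\<tau> e, c, []))" using P_valid[OF e v0] .
  ultimately show ?case by (simp add: P_def)
next
  case (3 e c e' c' L)
  let ?L = "(e', c') # L"
  have e: "e \<in> E" and tt: "\<tau> e = \<iota> e'" and nr: "\<not> (e' = ebar e \<and> \<beta> e dvd c)"
    and rl: "redl ?L" using 3 by auto
  obtain H r rest where IH: "actw (sw ?L) (\<tau> (fst (last ?L)), 0, []) = (\<iota> e', H, (e', r) # rest)"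
    "\<alpha> e' dvd H" "valid (actw (sw ?L) (\<tau> (fst (last ?L)), 0, []))"
    using 3(1)[OF rl] by auto
  have sweq: "sw ((e, c) # ?L) = [(Inr e, True)] @ gpow (Inl (\<tau> e)) c @ sw ?L"
    by (simp add: sw_def)
  have lst: "last ((e, c) # ?L) = last ?L" by simp
  let ?z = "(\<tau> e, H + c, (e', r) # rest)"
  have vz: "vt (\<tau> e) ((e', r) # rest)" using IH(3) IH(1) tt by (simp add: valid_def)
  have np: "\<not> ((H + c) mod \<beta> e = 0 \<and> e' = ebar e)"
  proof
    assume a: "(H + c) mod \<beta> e = 0 \<and> e' = ebar e"
    then have "\<alpha> e' = \<beta> e" using beta_bar e by simp
    then have "\<beta> e dvd H" using IH(2) by simp
    moreover have "\<beta> e dvd H + c" using a by (simp add: dvd_eq_mod_eq_0)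
    ultimately have "\<beta> e dvd c" by (simp add: dvd_add_right_iff)
    then show False using nr a by simp
  qed
  have res: "actw (sw ((e, c) # ?L)) (\<tau> (fst (last ((e, c) # ?L))), 0, []) = P e ?z"
    using sweq lst IH(1) tt e by (simp add: actw_gpow sig_def)
  have "P e ?z = (\<iota> e, (H + c) div \<beta> e * \<alpha> e, (e, (H + c) mod \<beta> e) # (e', r) # rest)"
    using np by (simp add: P_def)
  moreover have "valid (P e ?z)" using P_valid[OF e vz] .
  ultimately show ?case using res by auto
qed simp

lemma britton:
  assumes "redl L" "L \<noteq> []"
  shows "\<not> pres_eq (gbs_relators E \<iota> \<tau> ebar \<alpha> \<beta>) (gpow (Inl a0) c0 @ sw L) (gpow (Inl a0) m)"
proof
  assume pe: "pres_eq (gbs_relators E \<iota> \<tau> ebar \<alpha> \<beta>) (gpow (Inl a0) c0 @ sw L) (gpow (Inl a0) m)"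
  let ?x = "(\<tau> (fst (last L)), 0::int, [] :: ('e \<times> int) list)"
  have vx: "valid ?x" by (simp add: valid_def)
  obtain H r rest where b: "actw (sw L) ?x = (\<iota> (fst (hd L)), H, (fst (hd L), r) # rest)"
    using britton_aux[OF assms] by blast
  have "actw (gpow (Inl a0) c0 @ sw L) ?x = actw (gpow (Inl a0) m) ?x"
    using actw_pres_eq[OF pe vx] .
  then show False using b by (simp add: actw_gpow split: if_splits)
qed

end



lemma prod_powi_shift:
  fixes f :: "'a \<Rightarrow> rat"
  assumes "finite D" "e \<in> D" "\<forall>d\<in>D. f d \<noteq> 0"
  shows "(\<Prod>d\<in>D. f d powi (s d + (if d = e then c else 0))) = (\<Prod>d\<in>D. f d powi s d) * f e powi c"
proof -
  have "(\<Prod>d\<in>D. f d powi (s d + (if d = e then c else 0))) =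
        (\<Prod>d\<in>D. f d powi s d * (if d = e then f d powi c else 1))"
    by (rule prod.cong) (use assms in \<open>auto simp: power_int_add\<close>)
  also have "\<dots> = (\<Prod>d\<in>D. f d powi s d) * (\<Prod>d\<in>D. if d = e then f d powi c else 1)"
    by (rule prod.distrib)
  also have "(\<Prod>d\<in>D. if d = e then f d powi c else 1) = f e powi c"
    using assms by (simp add: prod.delta)
  finally show ?thesis .
qed

locale gbsf = gbsg V E \<iota> \<tau> ebar \<alpha> \<beta>
  for V :: "'v set" and E :: "'e set" and \<iota> \<tau> :: "'e \<Rightarrow> 'v" and ebar :: "'e \<Rightarrow> 'e"
    and \<alpha> \<beta> :: "'e \<Rightarrow> int" +
  fixes n :: nat and a :: "nat \<Rightarrow> 'v" and y :: "nat \<Rightarrow> 'e" and k :: "nat \<Rightarrow> int" and D :: "'e set"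
  assumes fact: "gbs_factorization V E \<iota> \<tau> n a y"
    and ori: "orientation E ebar D"
begin

lemma yE: "p \<in> {1..n} \<Longrightarrow> y p \<in> E" using fact by (auto simp: gbs_factorization_def)
lemma y_iota: "p \<in> {1..n} \<Longrightarrow> \<iota> (y p) = a (p - 1)" using fact by (auto simp: gbs_factorization_def)
lemma y_tau: "p \<in> {1..n} \<Longrightarrow> \<tau> (y p) = a p" using fact by (auto simp: gbs_factorization_def)
lemma finE: "finite E" using gbs by (simp add: gbs_graph_def)
lemma DE: "D \<subseteq> E" using ori by (simp add: orientation_def)
lemma finD: "finite D" using finE DE finite_subset by blast
lemma ori2: "e \<in> E \<Longrightarrow> (e \<in> D) \<noteq> (ebar e \<in> D)" using ori by (simp add: orientation_def)

definition dl :: "'e \<Rightarrow> 'e \<Rightarrow> int" where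
  "dl e d = (if e = d then 1 else 0) - (if e = ebar d then 1 else 0)"

definition S :: "nat \<Rightarrow> 'e \<Rightarrow> int" where "S p d = rho ebar y 0 p d"

lemma S_0: "S 0 d = 0" by (simp add: S_def rho_def)
lemma S_Suc: "S (Suc p) d = S p d + dl (y (Suc p)) d"
  by (simp add: S_def rho_def dl_def)

lemma rho_S: "i \<le> j \<Longrightarrow> rho ebar y i j d = S j d - S i d"
proof (induction j rule: dec_induct)
  case base then show ?case by (simp add: rho_def)
next
  case (step m)
  have "rho ebar y i (Suc m) d = rho ebar y i m d + dl (y (Suc m)) d"
    using step by (simp add: rho_def dl_def)
  then show ?case using step S_Suc by simp
qed

lemma dl_bar: "e \<in> E \<Longrightarrow> d \<in> E \<Longrightarrow> dl (ebar e) d = - dl e d"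
proof -
  assume e: "e \<in> E" and d: "d \<in> E"
  have 1: "(ebar e = d) = (e = ebar d)" using e d ebar2 by force
  have 2: "(ebar e = ebar d) = (e = d)" using e d ebar2 by metis
  show ?thesis by (simp add: dl_def 1 2)
qed

definition R :: "'e \<Rightarrow> rat" where "R e = of_int (\<alpha> e) / of_int (\<beta> e)"

lemma R_nz: "e \<in> E \<Longrightarrow> R e \<noteq> 0" by (simp add: R_def alpha_nz beta_nz)

lemma R_bar: "e \<in> E \<Longrightarrow> R (ebar e) = inverse (R e)"
  by (simp add: R_def alpha_bar beta_bar)

definition W :: "nat \<Rightarrow> rat" where "W p = (\<Prod>d\<in>D. R d powi S p d)"

lemma W_nz: "W p \<noteq> 0"
  unfolding W_def using R_nz DE finD by (auto simp: prod_zero_iff)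

lemma W_cong: "\<forall>d\<in>D. S p d = S q d \<Longrightarrow> W p = W q"
  unfolding W_def by (rule prod.cong) auto

lemma W_Suc: assumes p: "Suc p \<le> n" shows "W (Suc p) = W p * R (y (Suc p))"
proof -
  let ?e = "y (Suc p)"
  have e: "?e \<in> E" using yE p by simp
  have nz: "\<forall>d\<in>D. R d \<noteq> 0" using R_nz DE by auto
  show ?thesis
  proof (cases "?e \<in> D")
    case True
    have "\<forall>d\<in>D. dl ?e d = (if d = ?e then 1 else 0)"
    proof
      fix d assume d: "d \<in> D"
      have "?e \<noteq> ebar d"
      proof
        assume "?e = ebar d"
        then have "ebar ?e = d" using d DE ebar2 by auto
        then show False using ori2[OF e] True d by simp
      qed
      then show "dl ?e d = (if d = ?e then 1 else 0)" by (auto simp: dl_def)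
    qed
    then have "W (Suc p) = (\<Prod>d\<in>D. R d powi (S p d + (if d = ?e then 1 else 0)))"
      unfolding W_def by (intro prod.cong) (auto simp: S_Suc)
    also have "\<dots> = W p * R ?e powi 1"
      unfolding W_def by (rule prod_powi_shift[OF finD True nz])
    finally show ?thesis by simp
  next
    case False
    have eb: "ebar ?e \<in> D" using ori2[OF e] False by simp
    have "\<forall>d\<in>D. dl ?e d = (if d = ebar ?e then -1 else 0)"
    proof
      fix d assume d: "d \<in> D"
      have "?e \<noteq> d" using False d by auto
      moreover have "(?e = ebar d) = (d = ebar ?e)" using d DE e ebar2 by force
      ultimately show "dl ?e d = (if d = ebar ?e then -1 else 0)" by (auto simp: dl_def)
    qed
    then have "W (Suc p) = (\<Prod>d\<in>D. R d powi (S p d + (if d = ebar ?e then -1 else 0)))"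
      unfolding W_def by (intro prod.cong) (auto simp: S_Suc)
    also have "\<dots> = W p * R (ebar ?e) powi (-1)"
      unfolding W_def by (rule prod_powi_shift[OF finD eb nz])
    also have "R (ebar ?e) powi (-1) = R ?e" using R_bar[OF e] by (simp add: power_int_minus)
    finally show ?thesis by simp
  qed
qed

lemma prod_R: "i \<le> v \<Longrightarrow> v \<le> n \<Longrightarrow> (\<Prod>\<mu>\<in>{i+1..v}. R (y \<mu>)) = W v / W i"
proof (induction v rule: dec_induct)
  case base then show ?case using W_nz by simp
next
  case (step m)
  then show ?case using W_Suc[of m] W_nz by simp
qed

definition Q :: "nat \<Rightarrow> rat" where "Q p = (\<Sum>t<p. of_int (k t) * W t)"

lemma Q_Suc: "Q (Suc p) = Q p + of_int (k p) * W p" by (simp add: Q_def)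

lemma kq_Q: assumes "i \<le> j" "j \<le> n" shows "kq \<alpha> \<beta> y k i j = (Q (Suc j) - Q i) / W i"
proof -
  have "kq \<alpha> \<beta> y k i j = (\<Sum>v=i..j. of_int (k v) * (W v / W i))"
    unfolding kq_def
  proof (rule sum.cong)
    fix v assume v: "v \<in> {i..j}"
    have "(\<Prod>\<mu>\<in>{i+1..v}. of_int (\<alpha> (y \<mu>)) / of_int (\<beta> (y \<mu>))) = (\<Prod>\<mu>\<in>{i+1..v}. R (y \<mu>))"
      by (simp add: R_def)
    also have "\<dots> = W v / W i" using prod_R v assms by simp
    finally show "of_int (k v) * (\<Prod>\<mu>\<in>{i+1..v}. of_int (\<alpha> (y \<mu>)) / of_int (\<beta> (y \<mu>))) = of_int (k v) * (W v / W i)"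
      by simp
  qed simp
  also have "\<dots> = (\<Sum>v=i..j. of_int (k v) * W v) / W i"
    by (simp add: sum_divide_distrib)
  also have "(\<Sum>v=i..j. of_int (k v) * W v) = Q (Suc j) - Q i"
    using assms(1)
  proof (induction j rule: dec_induct)
    case base then show ?case by (simp add: Q_Suc)
  next
    case (step m) then show ?case by (simp add: Q_Suc)
  qed
  finally show ?thesis .
qed

definition Lat :: "nat \<Rightarrow> rat" where "Lat p = of_int (\<beta> (y p)) * W p"

lemma S_swap:
  assumes p: "p \<in> {1..n}" and q: "q \<in> {1..n}" and yy: "y p = ebar (y q)"
  shows "(\<forall>d\<in>D. S (q - 1) d = S p d) \<longleftrightarrow> (\<forall>d\<in>D. S (p - 1) d = S q d)"
proof -
  have eq: "y q \<in> E" using yE q by simp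
  have sp: "\<And>d. S p d = S (p - 1) d + dl (y p) d" using p S_Suc[of "p-1"] by simp
  have sq: "\<And>d. S q d = S (q - 1) d + dl (y q) d" using q S_Suc[of "q-1"] by simp
  have "\<And>d. d \<in> D \<Longrightarrow> dl (y p) d = - dl (y q) d" using dl_bar[OF eq] yy DE by auto
  then show ?thesis using sp sq by force
qed

lemma Lat_swap:
  assumes p: "p \<in> {1..n}" and q: "q \<in> {1..n}" and yy: "y p = ebar (y q)"
    and ss: "\<forall>d\<in>D. S (p - 1) d = S q d"
  shows "Lat q = Lat p"
proof -
  have ep: "y p \<in> E" using yE p by simp
  have yq: "y q = ebar (y p)" using yy ep yE q ebar2 by auto
  have "W q = W (p - 1)" using W_cong ss by metis
  moreover have "W p = W (p - 1) * R (y p)" using W_Suc[of "p - 1"] p by simp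
  moreover have "\<beta> (y q) = \<alpha> (y p)" using yq alpha_bar ep by simp
  ultimately show ?thesis unfolding Lat_def R_def using beta_nz[OF ep] by simp
qed

definition simq :: "nat \<Rightarrow> nat \<Rightarrow> bool" where
  "simq p q \<longleftrightarrow> p \<in> {1..n} \<and> q \<in> {1..n} \<and> y p = ebar (y q) \<and> (\<forall>d\<in>D. S (p - 1) d = S q d)
     \<and> (\<exists>m::int. Q q - Q p = of_int m * Lat p)"

abbreviation sim :: "nat \<Rightarrow> nat \<Rightarrow> bool" where
  "sim p q \<equiv> simC n ebar \<alpha> \<beta> D y k p q"

lemma cond_char:
  assumes pq: "p < q" and p: "p \<in> {1..n}" and q: "q \<in> {1..n}" and yy: "y p = ebar (y q)"
  shows "simC_cond ebar \<alpha> \<beta> D y k p q \<longleftrightarrow>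
    (\<forall>d\<in>D. S (p - 1) d = S q d) \<and> (\<exists>m::int. Q q - Q p = of_int m * Lat p)"
proof -
  have r: "(\<forall>d\<in>D. rho ebar y p (q - 1) d = 0) \<longleftrightarrow> (\<forall>d\<in>D. S (q - 1) d = S p d)"
    using rho_S[of p "q - 1"] pq by auto
  have kqe: "kq \<alpha> \<beta> y k p (q - 1) = (Q q - Q p) / W p"
    using kq_Q[of p "q - 1"] pq q by simp
  have wnz: "W p \<noteq> 0" by (rule W_nz)
  have "(\<exists>m::int. kq \<alpha> \<beta> y k p (q - 1) = of_int (\<beta> (y p)) * of_int m) \<longleftrightarrow>
        (\<exists>m::int. Q q - Q p = of_int m * Lat p)"
    unfolding kqe Lat_def using wnz by (simp add: field_simps)
  then show ?thesis unfolding simC_cond_def using r S_swap[OF p q yy] by simp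
qed

lemma sim_char: "sim p q \<longleftrightarrow> simq p q"
proof (cases "p \<in> {1..n} \<and> q \<in> {1..n} \<and> y p = ebar (y q)")
  case False then show ?thesis by (auto simp: simC_def simq_def)
next
  case True
  then have p: "p \<in> {1..n}" and q: "q \<in> {1..n}" and yy: "y p = ebar (y q)" by auto
  have ep: "y p \<in> E" and eq: "y q \<in> E" using yE p q by auto
  have yq: "y q = ebar (y p)" using yy eq by simp
  have neq: "p \<noteq> q" using yy ebar_neq[OF eq] by auto
  show ?thesis
  proof (cases "p < q")
    case True
    then show ?thesis using cond_char[OF True p q yy] p q yy by (auto simp: simC_def simq_def)
  next
    case False
    then have qp: "q < p" using neq by simp
    have cc: "simC_cond ebar \<alpha> \<beta> D y k q p \<longleftrightarrow>
      (\<forall>d\<in>D. S (q - 1) d = S p d) \<and> (\<exists>m::int. Q p - Q q = of_int m * Lat q)"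
      using cond_char[OF qp q p yq] .
    have "(\<forall>d\<in>D. S (q - 1) d = S p d) \<longleftrightarrow> (\<forall>d\<in>D. S (p - 1) d = S q d)"
      using S_swap[OF q p yq] by simp
    moreover have "(\<forall>d\<in>D. S (p - 1) d = S q d) \<Longrightarrow>
       (\<exists>m::int. Q p - Q q = of_int m * Lat q) \<longleftrightarrow> (\<exists>m::int. Q q - Q p = of_int m * Lat p)"
    proof -
      assume ss: "\<forall>d\<in>D. S (p - 1) d = S q d"
      have L: "Lat q = Lat p" using Lat_swap[OF p q yy ss] .
      show ?thesis
      proof
        assume "\<exists>m::int. Q p - Q q = of_int m * Lat q"
        then obtain m where "Q p - Q q = of_int m * Lat q" by blast
        then have "Q q - Q p = of_int (- m) * Lat p" using L by simp
        then show "\<exists>m::int. Q q - Q p = of_int m * Lat p" by blast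
      next
        assume "\<exists>m::int. Q q - Q p = of_int m * Lat p"
        then obtain m where "Q q - Q p = of_int m * Lat p" by blast
        then have "Q p - Q q = of_int (- m) * Lat q" using L by simp
        then show "\<exists>m::int. Q p - Q q = of_int m * Lat q" by blast
      qed
    qed
    ultimately show ?thesis using qp cc p q yy neq unfolding simC_def simq_def by auto
  qed
qed

lemma sim_sym: "sim p q \<Longrightarrow> sim q p"
proof -
  assume s: "sim p q"
  then have q: "q \<in> {1..n}" by (simp add: simC_def)
  have "y q = ebar (y p)" using s yE[OF q] by (auto simp: simC_def)
  then show ?thesis using s by (auto simp: simC_def)
qed

lemma sim_trans3: "sim a1 b \<Longrightarrow> sim c b \<Longrightarrow> sim c d \<Longrightarrow> sim a1 d"
proof -
  assume 1: "sim a1 b" and 2: "sim c b" and 3: "sim c d"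
  have s1: "simq a1 b" and s2: "simq c b" and s3: "simq c d" using 1 2 3 sim_char by auto
  have a1: "a1 \<in> {1..n}" and c: "c \<in> {1..n}" and d: "d \<in> {1..n}" using s1 s2 s3 by (auto simp: simq_def)
  have ya: "y a1 = y c" using s1 s2 by (simp add: simq_def)
  have yd: "y a1 = ebar (y d)" using ya s3 by (simp add: simq_def)
  have Sa: "\<forall>dd\<in>D. S (a1 - 1) dd = S (c - 1) dd" using s1 s2 by (simp add: simq_def)
  have Sd: "\<forall>dd\<in>D. S (a1 - 1) dd = S d dd" using Sa s3 by (simp add: simq_def)
  have "W (a1 - 1) = W (c - 1)" using W_cong Sa by metis
  moreover have "W a1 = W (a1 - 1) * R (y a1)" "W c = W (c - 1) * R (y c)"
    using W_Suc[of "a1 - 1"] W_Suc[of "c - 1"] a1 c by auto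
  ultimately have LL: "Lat a1 = Lat c" using ya by (simp add: Lat_def)
  obtain m1 where m1: "Q b - Q a1 = of_int m1 * Lat a1" using s1 by (auto simp: simq_def)
  obtain m2 where m2: "Q b - Q c = of_int m2 * Lat c" using s2 by (auto simp: simq_def)
  obtain m3 where m3: "Q d - Q c = of_int m3 * Lat c" using s3 by (auto simp: simq_def)
  have "Q d - Q a1 = of_int (m3 - m2 + m1) * Lat a1"
    using m1 m2 m3 LL by (simp add: algebra_simps)
  then have "\<exists>m::int. Q d - Q a1 = of_int m * Lat a1" by blast
  then have "simq a1 d" using a1 d yd Sd unfolding simq_def by blast
  then show ?thesis using sim_char by simp
qed

end



context gbsf
begin

abbreviation Rel where "Rel \<equiv> gbs_relators E \<iota> \<tau> ebar \<alpha> \<beta>"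

definition Zw :: "'e \<Rightarrow> int \<Rightarrow> (('v + 'e) \<times> bool) list" where
  "Zw e x = [(Inr e, True)] @ gpow (Inl (\<tau> e)) x @ [(Inr (ebar e), True)]"

lemma Zw_add: assumes e: "e \<in> E" shows "pres_eq Rel (Zw e x @ Zw e x') (Zw e (x + x'))"
proof -
  have r: "[(Inr (ebar e), True), (Inr e, True)] \<in> Rel" using e unfolding gbs_relators_def by blast
  have "Zw e x @ Zw e x' = ([(Inr e, True)] @ gpow (Inl (\<tau> e)) x) @ [(Inr (ebar e), True), (Inr e, True)] @ (gpow (Inl (\<tau> e)) x' @ [(Inr (ebar e), True)])"
    by (simp add: Zw_def)
  then have "pres_eq Rel (Zw e x @ Zw e x') (([(Inr e, True)] @ gpow (Inl (\<tau> e)) x) @ (gpow (Inl (\<tau> e)) x' @ [(Inr (ebar e), True)]))"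
    using pres_eq.pe_rel[OF r] by metis
  moreover have "pres_eq Rel ([(Inr e, True)] @ (gpow (Inl (\<tau> e)) x @ gpow (Inl (\<tau> e)) x') @ [(Inr (ebar e), True)]) (Zw e (x + x'))"
    unfolding Zw_def by (rule pe_cong[OF gpow_add])
  ultimately show ?thesis by (auto intro: pres_eq.pe_trans)
qed

lemma Zw_0: assumes e: "e \<in> E" shows "pres_eq Rel (Zw e 0) []"
proof -
  have "[(Inr (ebar (ebar e)), True), (Inr (ebar e), True)] \<in> Rel"
    using ebarE[OF e] unfolding gbs_relators_def by blast
  then show ?thesis using e by (simp add: Zw_def pe_del)
qed

lemma gpow_inv: "pres_eq Rs (gpow g x @ gpow g (- x)) []"
  using gpow_add[of Rs g x "-x"] by simp

lemma Zw_beta: assumes e: "e \<in> E" shows "pres_eq Rel (Zw e (\<beta> e)) (gpow (Inl (\<iota> e)) (\<alpha> e))"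
proof -
  have r: "Zw e (\<beta> e) @ gpow (Inl (\<iota> e)) (- \<alpha> e) \<in> Rel" using e unfolding gbs_relators_def Zw_def
    by (intro UnI2 CollectI exI[of _ e]) simp
  have "pres_eq Rel (Zw e (\<beta> e) @ (gpow (Inl (\<iota> e)) (- \<alpha> e) @ gpow (Inl (\<iota> e)) (\<alpha> e))) (Zw e (\<beta> e) @ [])"
    using pe_congL[OF gpow_add[of Rel "Inl (\<iota> e)" "- \<alpha> e" "\<alpha> e"]] by simp
  then have 1: "pres_eq Rel (Zw e (\<beta> e)) (Zw e (\<beta> e) @ gpow (Inl (\<iota> e)) (- \<alpha> e) @ gpow (Inl (\<iota> e)) (\<alpha> e))"
    by (simp add: pres_eq.pe_sym)
  have 2: "pres_eq Rel ((Zw e (\<beta> e) @ gpow (Inl (\<iota> e)) (- \<alpha> e)) @ gpow (Inl (\<iota> e)) (\<alpha> e)) ([] @ gpow (Inl (\<iota> e)) (\<alpha> e))"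
    by (rule pe_congR[OF pe_del[OF r]])
  show ?thesis using 1 2 by (auto intro: pres_eq.pe_trans)
qed

lemma Zw_nat: assumes e: "e \<in> E" shows "pres_eq Rel (Zw e (\<beta> e * int d)) (gpow (Inl (\<iota> e)) (\<alpha> e * int d))"
proof (induction d)
  case 0 then show ?case using Zw_0[OF e] by simp
next
  case (Suc d)
  have "pres_eq Rel (Zw e (\<beta> e * int d + \<beta> e)) (Zw e (\<beta> e * int d) @ Zw e (\<beta> e))"
    using Zw_add[OF e] pres_eq.pe_sym by blast
  moreover have "pres_eq Rel (Zw e (\<beta> e * int d) @ Zw e (\<beta> e)) (gpow (Inl (\<iota> e)) (\<alpha> e * int d) @ gpow (Inl (\<iota> e)) (\<alpha> e))"
    by (rule pe_app[OF Suc Zw_beta[OF e]])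
  moreover have "pres_eq Rel (gpow (Inl (\<iota> e)) (\<alpha> e * int d) @ gpow (Inl (\<iota> e)) (\<alpha> e)) (gpow (Inl (\<iota> e)) (\<alpha> e * int d + \<alpha> e))"
    by (rule gpow_add)
  ultimately show ?case by (auto intro: pres_eq.pe_trans simp: algebra_simps)
qed

lemma pinch: assumes e: "e \<in> E" shows "pres_eq Rel (Zw e (\<beta> e * m)) (gpow (Inl (\<iota> e)) (\<alpha> e * m))"
proof (cases "m \<ge> 0")
  case True
  then obtain d where "m = int d" using nonneg_eq_int by blast
  then show ?thesis using Zw_nat[OF e] by simp
next
  case False
  then obtain d where m: "m = - int d" by (metis linorder_not_le neg_int_cases less_le)
  let ?Z = "Zw e (\<beta> e * m)" and ?g = "\<lambda>x. gpow (Inl (\<iota> e)) x"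
  have a1: "pres_eq Rel (?Z @ Zw e (\<beta> e * int d)) []"
    using Zw_add[OF e, of "\<beta> e * m" "\<beta> e * int d"] Zw_0[OF e] m by (auto intro: pres_eq.pe_trans)
  have a2: "pres_eq Rel (?Z @ Zw e (\<beta> e * int d) @ ?g (- (\<alpha> e * int d))) ([] @ ?g (- (\<alpha> e * int d)))"
    using pe_congR[OF a1] by simp
  have a3: "pres_eq Rel (Zw e (\<beta> e * int d) @ ?g (- (\<alpha> e * int d))) []"
    using pe_congR[OF Zw_nat[OF e, of d], of "?g (- (\<alpha> e * int d))"] gpow_inv[of Rel "Inl (\<iota> e)" "\<alpha> e * int d"]
    by (auto intro: pres_eq.pe_trans)
  have a4: "pres_eq Rel (?Z @ Zw e (\<beta> e * int d) @ ?g (- (\<alpha> e * int d))) (?Z @ [])"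
    using pe_congL[OF a3] by simp
  show ?thesis using a2 a4 m by (auto intro: pres_eq.pe_trans pres_eq.pe_sym)
qed

section \<open>The stack algorithm\<close>

fun istep :: "nat \<Rightarrow> (nat \<times> int) list \<Rightarrow> (nat \<times> int) list" where
  "istep q ((p, c) # (p', c') # rest) = (if sim p q then (p', c' + (c div \<beta> (y p)) * \<alpha> (y p) + k q) # rest
      else (q, k q) # (p, c) # (p', c') # rest)"
| "istep q st = (q, k q) # st"

definition sg :: "nat \<Rightarrow> nat \<Rightarrow> int \<Rightarrow> bool" where
  "sg p t c \<longleftrightarrow> of_int c * W p = Q (Suc t) - Q p \<and> (\<forall>d\<in>D. S p d = S t d) \<and> a p = a t"

fun okS :: "nat \<Rightarrow> nat \<Rightarrow> (nat \<times> int) list \<Rightarrow> bool" where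
  "okS i t [] = False"
| "okS i t [(p, c)] = (p = i \<and> i \<le> t \<and> sg p t c)"
| "okS i t ((p, c) # (p', c') # rest) = (i < p \<and> p \<le> t \<and> sg p t c \<and> okS i (p - 1) ((p', c') # rest) \<and>
      (p' \<noteq> i \<longrightarrow> \<not> (y p = ebar (y p') \<and> \<beta> (y p') dvd c')))"

definition sgw :: "nat \<Rightarrow> nat \<times> int \<Rightarrow> (('v + 'e) \<times> bool) list" where
  "sgw i pc = (if fst pc = i then [] else [(Inr (y (fst pc)), True)]) @ gpow (Inl (a (fst pc))) (snd pc)"

definition Rw :: "nat \<Rightarrow> (nat \<times> int) list \<Rightarrow> (('v + 'e) \<times> bool) list" where
  "Rw i st = concat (map (sgw i) (rev st))"

lemma Rw_Cons: "Rw i (x # st) = Rw i st @ sgw i x" by (simp add: Rw_def)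

lemma wword_Suc: "i \<le> t \<Longrightarrow> wword a y k i (Suc t) = wword a y k i t @ [(Inr (y (Suc t)), True)] @ gpow (Inl (a (Suc t))) (k (Suc t))"
  by (simp add: wword_def)

lemma sg_base: "sg q q (k q)" by (simp add: sg_def Q_Suc)

lemma okS_top: "okS i t ((p, c) # st) \<Longrightarrow> sg p t c \<and> p \<le> t \<and> (st = [] \<longrightarrow> p = i) \<and> (st \<noteq> [] \<longrightarrow> i < p)"
  by (cases st) (auto simp: sg_def)

lemma okS_i_le: "okS i t st \<Longrightarrow> i \<le> t"
proof (induction i t st rule: okS.induct)
qed auto

lemma step_ok:
  assumes ok: "okS i t st" and tn: "t < n" and pe: "pres_eq Rel (wword a y k i t) (Rw i st)"
  shows "okS i (Suc t) (istep (Suc t) st) \<and> pres_eq Rel (wword a y k i (Suc t)) (Rw i (istep (Suc t) st))"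
proof -
  let ?q = "Suc t"
  have it: "i \<le> t" using okS_i_le[OF ok] .
  have q: "?q \<in> {1..n}" using tn by simp
  have ww: "wword a y k i ?q = wword a y k i t @ [(Inr (y ?q), True)] @ gpow (Inl (a ?q)) (k ?q)"
    using wword_Suc[OF it] .
  have pe1: "pres_eq Rel (wword a y k i ?q) (Rw i st @ [(Inr (y ?q), True)] @ gpow (Inl (a ?q)) (k ?q))"
    unfolding ww by (rule pe_congR[OF pe])
  have push_pe: "pres_eq Rel (wword a y k i ?q) (Rw i ((?q, k ?q) # st))"
  proof -
    have "?q \<noteq> i" using it by simp
    then show ?thesis using pe1 by (simp add: Rw_Cons sgw_def)
  qed
  show ?thesis
  proof (cases "\<exists>p c p' c' rest. st = (p, c) # (p', c') # rest")
    case True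
    then obtain p c p' c' rest where st: "st = (p, c) # (p', c') # rest" by blast
    from ok st have ip: "i < p" and pt: "p \<le> t" and sgp: "sg p t c"
      and ok2: "okS i (p - 1) ((p', c') # rest)"
      and rdc: "p' \<noteq> i \<longrightarrow> \<not> (y p = ebar (y p') \<and> \<beta> (y p') dvd c')" by auto
    have p: "p \<in> {1..n}" using ip pt tn by simp
    have ep: "y p \<in> E" using yE[OF p] .
    have eq: "y ?q \<in> E" using yE[OF q] .
    have sgp': "sg p' (p - 1) c'" using okS_top[OF ok2] by simp
    have cW: "of_int c * W p = Q ?q - Q p" using sgp by (simp add: sg_def)
    have Spt: "\<forall>d\<in>D. S p d = S t d" using sgp by (simp add: sg_def)
    have c'W: "of_int c' * W p' = Q p - Q p'" using sgp' p by (simp add: sg_def)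
    have Sp': "\<forall>d\<in>D. S p' d = S (p - 1) d" using sgp' by (simp add: sg_def)
    have ap': "a p' = a (p - 1)" using sgp' by (simp add: sg_def)
    show ?thesis
    proof (cases "sim p ?q")
      case True
      have sq: "simq p ?q" using True sim_char by simp
      have yy: "y p = ebar (y ?q)" and Sq: "\<forall>d\<in>D. S (p - 1) d = S ?q d"
        using sq by (auto simp: simq_def)
      obtain m where m: "Q ?q - Q p = of_int m * Lat p" using sq by (auto simp: simq_def)
      have yq: "y ?q = ebar (y p)" using yy eq by simp
      have Wnz: "W p \<noteq> 0" by (rule W_nz)
      have "of_int c * W p = of_int (m * \<beta> (y p)) * W p" using cW m by (simp add: Lat_def)
      then have "(of_int c :: rat) = of_int (m * \<beta> (y p))" using Wnz by simp
      then have cm: "c = m * \<beta> (y p)" by (simp only: of_int_eq_iff)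
      have cdiv: "c div \<beta> (y p) = m" using cm beta_nz[OF ep] by simp
      have Wq: "W ?q = W p'" using W_cong Sq Sp' by metis
      have Wp1: "W (p - 1) = W p'" using W_cong Sp' by metis
      have Wp: "W p = W p' * R (y p)" using W_Suc[of "p - 1"] p Wp1 by simp
      let ?c2 = "c' + (c div \<beta> (y p)) * \<alpha> (y p) + k ?q"
      have new: "istep ?q st = (p', ?c2) # rest" using st True by simp
      have cW2: "of_int ?c2 * W p' = Q (Suc ?q) - Q p'"
      proof -
        have "Q ?q - Q p = of_int m * of_int (\<beta> (y p)) * (W p' * R (y p))"
          using m Wp by (simp add: Lat_def)
        also have "\<dots> = of_int m * of_int (\<alpha> (y p)) * W p'"
          using beta_nz[OF ep] by (simp add: R_def)
        finally have A: "Q ?q - Q p = of_int m * of_int (\<alpha> (y p)) * W p'" .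
        have B: "Q (Suc ?q) = Q ?q + of_int (k ?q) * W p'" using Q_Suc Wq by simp
        show ?thesis using A B c'W cdiv by (simp add: algebra_simps)
      qed
      have Sq2: "\<forall>d\<in>D. S p' d = S ?q d" using Sq Sp' by simp
      have aq: "a p' = a ?q"
      proof -
        have "a ?q = \<tau> (y ?q)" using y_tau[OF q] by simp
        also have "\<dots> = \<iota> (y p)" using yq tau_bar ep by simp
        also have "\<dots> = a (p - 1)" using y_iota[OF p] .
        finally show ?thesis using ap' by simp
      qed
      have sgnew: "sg p' ?q ?c2" using cW2 Sq2 aq by (simp add: sg_def)
      have ok_new: "okS i ?q ((p', ?c2) # rest)"
      proof (cases rest)
        case Nil then show ?thesis using ok2 sgnew it by simp
      next
        case (Cons r rest')
        obtain p'' c'' where r: "r = (p'', c'')" by (cases r)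
        have ok2': "okS i (p - 1) ((p', c') # (p'', c'') # rest')" using ok2 Cons r by simp
        then have "i < p'" "p' \<le> p - 1" "okS i (p' - 1) ((p'', c'') # rest')"
          "p'' \<noteq> i \<longrightarrow> \<not> (y p' = ebar (y p'') \<and> \<beta> (y p'') dvd c'')" by auto
        then show ?thesis using Cons r sgnew pt by simp
      qed
      have pe_new: "pres_eq Rel (wword a y k i ?q) (Rw i ((p', ?c2) # rest))"
      proof -
        let ?pre = "if p' = i then [] else [(Inr (y p'), True)]"
        let ?A = "Inl (a p')"
        have pi: "p \<noteq> i" using ip by simp
        have Rst: "Rw i st = Rw i rest @ ?pre @ gpow ?A c' @ [(Inr (y p), True)] @ gpow (Inl (a p)) c"
          using st pi by (simp add: Rw_Cons sgw_def)
        have zz: "[(Inr (y p), True)] @ gpow (Inl (a p)) c @ [(Inr (y ?q), True)] = Zw (y p) (\<beta> (y p) * m)"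
          using yq y_tau[OF p] cm by (simp add: Zw_def mult.commute)
        have ia: "\<iota> (y p) = a p'" using y_iota[OF p] ap' by simp
        have P1: "pres_eq Rel (Zw (y p) (\<beta> (y p) * m)) (gpow ?A (\<alpha> (y p) * m))"
          using pinch[OF ep, of m] ia by simp
        have eq1: "Rw i st @ [(Inr (y ?q), True)] @ gpow (Inl (a ?q)) (k ?q) =
           (Rw i rest @ ?pre) @ (gpow ?A c' @ ([(Inr (y p), True)] @ gpow (Inl (a p)) c @ [(Inr (y ?q), True)]) @ gpow ?A (k ?q))"
          using Rst aq by simp
        have P2: "pres_eq Rel (gpow ?A c' @ ([(Inr (y p), True)] @ gpow (Inl (a p)) c @ [(Inr (y ?q), True)]) @ gpow ?A (k ?q))
            (gpow ?A c' @ gpow ?A (\<alpha> (y p) * m) @ gpow ?A (k ?q))"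
          unfolding zz by (rule pe_cong[OF P1])
        have P3: "pres_eq Rel (gpow ?A c' @ gpow ?A (\<alpha> (y p) * m) @ gpow ?A (k ?q)) (gpow ?A ?c2)"
        proof -
          have "pres_eq Rel (gpow ?A c' @ gpow ?A (\<alpha> (y p) * m) @ gpow ?A (k ?q)) (gpow ?A c' @ gpow ?A (\<alpha> (y p) * m + k ?q))"
            by (rule pe_congL[OF gpow_add])
          moreover have "pres_eq Rel (gpow ?A c' @ gpow ?A (\<alpha> (y p) * m + k ?q)) (gpow ?A (c' + (\<alpha> (y p) * m + k ?q)))"
            by (rule gpow_add)
          ultimately show ?thesis using cdiv by (auto intro: pres_eq.pe_trans simp: algebra_simps)
        qed
        have "pres_eq Rel (Rw i st @ [(Inr (y ?q), True)] @ gpow (Inl (a ?q)) (k ?q)) ((Rw i rest @ ?pre) @ gpow ?A ?c2)"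
          unfolding eq1 using pe_congL[OF pres_eq.pe_trans[OF P2 P3]] by blast
        moreover have "Rw i ((p', ?c2) # rest) = (Rw i rest @ ?pre) @ gpow ?A ?c2"
          by (simp add: Rw_Cons sgw_def)
        ultimately show ?thesis using pe1 by (auto intro: pres_eq.pe_trans)
      qed
      show ?thesis using new ok_new pe_new by simp
    next
      case False
      have new: "istep ?q st = (?q, k ?q) # st" using st False by simp
      have nr: "\<not> (y ?q = ebar (y p) \<and> \<beta> (y p) dvd c)"
      proof
        assume h: "y ?q = ebar (y p) \<and> \<beta> (y p) dvd c"
        then obtain m where cm: "c = \<beta> (y p) * m" by (auto simp: dvd_def)
        have yy: "y p = ebar (y ?q)" using h ep by simp
        have "\<forall>d\<in>D. S (p - 1) d = S ?q d"
        proof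
          fix d assume d: "d \<in> D"
          have "S ?q d = S t d + dl (y ?q) d" by (simp add: S_Suc)
          also have "\<dots> = S p d + dl (y ?q) d" using Spt d by simp
          also have "S p d = S (p - 1) d + dl (y p) d" using p S_Suc[of "p - 1"] by simp
          also have "dl (y ?q) d = - dl (y p) d" using h dl_bar[OF ep] d DE by auto
          finally show "S (p - 1) d = S ?q d" by simp
        qed
        moreover have "Q ?q - Q p = of_int m * Lat p" using cW cm by (simp add: Lat_def algebra_simps)
        ultimately have "simq p ?q" using p q yy unfolding simq_def by blast
        then show False using False sim_char by simp
      qed
      have "okS i ?q ((?q, k ?q) # st)"
        using st ok sg_base ip nr pt by simp
      then show ?thesis using new push_pe by simp
    qed
  next
    case other: False
    have sts: "\<exists>c. st = [(i, c)]"
    proof (cases st)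
      case Nil then show ?thesis using ok by simp
    next
      case (Cons x xs)
      then show ?thesis using other ok by (cases xs; cases x) auto
    qed
    then obtain c where stc: "st = [(i, c)]" by blast
    have "okS i ?q ((?q, k ?q) # st)" using ok stc sg_base it by simp
    then show ?thesis using stc push_pe by simp
  qed
qed

definition stk :: "nat \<Rightarrow> nat \<Rightarrow> (nat \<times> int) list" where
  "stk i t = fold istep [Suc i..<Suc t] [(i, k i)]"

lemma stk_Suc: "i \<le> t \<Longrightarrow> stk i (Suc t) = istep (Suc t) (stk i t)"
  by (simp add: stk_def)

lemma stk_inv: "i \<le> t \<Longrightarrow> t \<le> n \<Longrightarrow> okS i t (stk i t) \<and> pres_eq Rel (wword a y k i t) (Rw i (stk i t))"
proof (induction t rule: dec_induct)
  case base
  have "stk i i = [(i, k i)]" by (simp add: stk_def)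
  moreover have "Rw i [(i, k i)] = wword a y k i i" by (simp add: Rw_def sgw_def wword_def)
  ultimately show ?case using sg_base by (simp add: pres_eq.pe_refl)
next
  case (step m)
  then show ?case using step_ok[of i m "stk i m"] stk_Suc by simp
qed

end



context gbsg
begin

lemma redl_snoc:
  "redl L \<Longrightarrow> e \<in> E \<Longrightarrow> (L \<noteq> [] \<longrightarrow> \<tau> (fst (last L)) = \<iota> e \<and> \<not> (e = ebar (fst (last L)) \<and> \<beta> (fst (last L)) dvd snd (last L)))
   \<Longrightarrow> redl (L @ [(e, c)])"
proof (induction L rule: redl.induct)
  case 1 then show ?case by simp
next
  case (2 e1 c1) then show ?case by simp
next
  case (3 e1 c1 e2 c2 L) then show ?case by simp
qed

lemma sw_append: "sw (L @ M) = sw L @ sw M" by (simp add: sw_def)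

end

context gbsf
begin

lemma RWL: "okS i t st \<Longrightarrow> t \<le> n \<Longrightarrow> \<exists>c0 L. Rw i st = gpow (Inl (a i)) c0 @ sw L \<and> redl L \<and> (L = [] \<longleftrightarrow> tl st = [])
   \<and> (L \<noteq> [] \<longrightarrow> last L = (y (fst (hd st)), snd (hd st)))"
proof (induction i t st rule: okS.induct)
  case (1 i t) then show ?case by simp
next
  case (2 i t p c)
  then have "Rw i [(p, c)] = gpow (Inl (a i)) c @ sw []" by (simp add: Rw_def sgw_def sw_def)
  then show ?case by fastforce
next
  case (3 i t p c p' c' rest)
  from 3(2) have ip: "i < p" and pt: "p \<le> t" and sgp: "sg p t c"
    and ok2: "okS i (p - 1) ((p', c') # rest)"
    and rdc: "p' \<noteq> i \<longrightarrow> \<not> (y p = ebar (y p') \<and> \<beta> (y p') dvd c')" by auto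
  obtain c0 L where IH: "Rw i ((p', c') # rest) = gpow (Inl (a i)) c0 @ sw L" "redl L"
    "(L = [] \<longleftrightarrow> rest = [])" "L \<noteq> [] \<longrightarrow> last L = (y p', c')"
    using 3(1)[OF ok2] 3(3) pt by fastforce
  have p: "p \<in> {1..n}" using ip pt 3(3) by simp
  have ep: "y p \<in> E" using yE[OF p] .
  have sgp': "sg p' (p - 1) c'" using okS_top[OF ok2] by simp
  have ap': "a p' = a (p - 1)" using sgp' by (simp add: sg_def)
  have Rw3: "Rw i ((p, c) # (p', c') # rest) = gpow (Inl (a i)) c0 @ sw (L @ [(y p, c)])"
    using IH(1) ip y_tau[OF p] by (simp add: Rw_Cons sgw_def sw_append) (simp add: sw_def)
  have rd: "redl (L @ [(y p, c)])"
  proof (rule redl_snoc[OF IH(2) ep], intro impI)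
    assume Lne: "L \<noteq> []"
    then have rne: "rest \<noteq> []" using IH(3) by simp
    then have ip': "i < p'" using ok2 by (cases rest) auto
    have p'r: "p' \<in> {1..n}" using ip' ok2 p okS_top[OF ok2] by auto
    have "\<tau> (y p') = \<iota> (y p)" using y_tau[OF p'r] y_iota[OF p] ap' by simp
    then show "\<tau> (fst (last L)) = \<iota> (y p) \<and> \<not> (y p = ebar (fst (last L)) \<and> \<beta> (fst (last L)) dvd snd (last L))"
      using IH(4) Lne rdc ip' by simp
  qed
  show ?case using Rw3 rd by fastforce
qed

fun pstep :: "nat \<Rightarrow> nat list \<Rightarrow> nat list" where
  "pstep q [] = [q]"
| "pstep q (p # ps) = (if sim p q then ps else q # p # ps)"

lemma istep_pos: "st \<noteq> [] \<Longrightarrow> map fst (butlast (istep q st)) = pstep q (map fst (butlast st))"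
proof (cases "\<exists>p c p' c' rest. st = (p, c) # (p', c') # rest")
  case True
  then obtain p c p' c' rest where st: "st = (p, c) # (p', c') # rest" by blast
  show ?thesis using st by (cases rest) auto
next
  case False
  assume ne: "st \<noteq> []"
  have "\<exists>x. st = [x]"
  proof (cases st)
    case Nil then show ?thesis using ne by simp
  next
    case (Cons x xs)
    show ?thesis
    proof (cases xs)
      case Nil then show ?thesis using Cons by simp
    next
      case (Cons z zs)
      obtain p c where "x = (p, c)" by (cases x)
      moreover obtain p' c' where "z = (p', c')" by (cases z)
      ultimately show ?thesis using False Cons \<open>st = x # xs\<close> by simp
    qed
  qed
  then obtain x where "st = [x]" by blast
  then show ?thesis by simp
qed

lemma stk_ne: "i \<le> t \<Longrightarrow> t \<le> n \<Longrightarrow> stk i t \<noteq> []"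
  using stk_inv[of i t] by (cases "stk i t") auto

lemma stk_pos: "i \<le> t \<Longrightarrow> t \<le> n \<Longrightarrow> map fst (butlast (stk i t)) = fold pstep [Suc i..<Suc t] []"
proof (induction t rule: dec_induct)
  case base then show ?case by (simp add: stk_def)
next
  case (step m)
  have "map fst (butlast (stk i (Suc m))) = pstep (Suc m) (map fst (butlast (stk i m)))"
    using stk_Suc[of i m] step istep_pos stk_ne[of i m] by simp
  then show ?case using step by simp
qed

lemma pstep_set: "set (pstep q ps) \<subseteq> insert q (set ps)"
  by (cases ps) auto

lemma FR:
  assumes "\<forall>p\<in>set ps \<union> set qs. \<forall>q\<in>set qs. (fst (L p) = fst (L q) \<and> snd (L p) \<noteq> snd (L q)) = sim p q"
  shows "fold red_step (map L qs) (map L ps) = map L (fold pstep qs ps)"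
  using assms
proof (induction qs arbitrary: ps)
  case Nil then show ?case by simp
next
  case (Cons x qs)
  have st: "red_step (L x) (map L ps) = map L (pstep x ps)"
  proof (cases ps)
    case Nil then show ?thesis by simp
  next
    case (Cons p ps')
    have "(fst (L p) = fst (L x) \<and> snd (L p) \<noteq> snd (L x)) = sim p x"
      using Cons.prems Cons by simp
    then show ?thesis using Cons by simp
  qed
  have "\<forall>p\<in>set (pstep x ps) \<union> set qs. \<forall>q\<in>set qs. (fst (L p) = fst (L q) \<and> snd (L p) \<noteq> snd (L q)) = sim p q"
    using Cons.prems pstep_set[of x ps] by auto
  then show ?case using Cons.IH st by simp
qed

section \<open>Classes\<close>

abbreviation apx where "apx p q \<equiv> approx n ebar \<alpha> \<beta> D y k p q"
abbreviation clsx where "clsx p \<equiv> cls n ebar \<alpha> \<beta> D y k p"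

lemma sim_range: "sim p q \<Longrightarrow> p \<in> {1..n} \<and> q \<in> {1..n}" by (simp add: simC_def)

lemma apx_trans: "apx p q \<Longrightarrow> apx q r \<Longrightarrow> apx p r"
  unfolding approx_def using sim_trans3 sim_sym by metis

lemma apx_sym: "apx p q \<Longrightarrow> apx q p"
  unfolding approx_def using sim_sym by metis

lemma apx_refl: "p \<in> {1..n} \<Longrightarrow> apx p p" by (simp add: approx_def)

lemma cls_eq: assumes "p \<in> {1..n}" "q \<in> {1..n}" shows "clsx p = clsx q \<longleftrightarrow> apx p q"
proof
  assume "clsx p = clsx q"
  then have "q \<in> clsx p" using apx_refl[OF assms(2)] by (simp add: cls_def)
  then show "apx p q" by (simp add: cls_def)
next
  assume a: "apx p q"
  show "clsx p = clsx q" unfolding cls_def using a apx_trans apx_sym by blast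
qed

lemma partner: assumes q: "q \<in> {1..n}" shows "(\<exists>i\<in>clsx q. \<exists>j. sim i j) \<longleftrightarrow> (\<exists>j. sim q j)"
proof
  assume "\<exists>i\<in>clsx q. \<exists>j. sim i j"
  then obtain i j where i: "apx q i" and ij: "sim i j" by (auto simp: cls_def)
  show "\<exists>j. sim q j"
  proof (cases "q = i")
    case True then show ?thesis using ij by blast
  next
    case False
    then obtain l where "sim q l" "sim l i" using i by (auto simp: approx_def)
    then have "sim q j" using sim_trans3 sim_sym ij by metis
    then show ?thesis by blast
  qed
next
  assume "\<exists>j. sim q j"
  then show "\<exists>i\<in>clsx q. \<exists>j. sim i j" using apx_refl[OF q] by (auto simp: cls_def)
qed

lemma sbar_eq: assumes p: "p \<in> {1..n}" and q: "q \<in> {1..n}"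
  shows "sbar n ebar \<alpha> \<beta> D y k (clsx q, False) = (clsx p, False) \<longleftrightarrow> sim q p"
proof (cases "\<exists>j. sim q j")
  case True
  then have ex: "\<exists>i\<in>clsx q. \<exists>j. sim i j" using partner[OF q] by simp
  let ?j0 = "SOME j. \<exists>i\<in>clsx q. sim i j"
  have ex2: "\<exists>j. \<exists>i\<in>clsx q. sim i j" using ex by blast
  have "\<exists>i\<in>clsx q. sim i ?j0" using someI_ex[OF ex2] .
  then obtain i0 where i0: "apx q i0" "sim i0 ?j0" by (auto simp: cls_def)
  have qj0: "sim q ?j0"
  proof (cases "q = i0")
    case True then show ?thesis using i0 by simp
  next
    case False
    then obtain l where "sim q l" "sim l i0" using i0 by (auto simp: approx_def)
    then show ?thesis using sim_trans3 sim_sym i0 by metis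
  qed
  have j0: "?j0 \<in> {1..n}" using sim_range[OF qj0] by simp
  have sb: "sbar n ebar \<alpha> \<beta> D y k (clsx q, False) = (clsx ?j0, False)"
    using ex by (simp add: sbar_def)
  have "clsx ?j0 = clsx p \<longleftrightarrow> sim q p"
  proof
    assume "clsx ?j0 = clsx p"
    then have "apx ?j0 p" using cls_eq[OF j0 p] by simp
    then show "sim q p"
    proof (cases "?j0 = p")
      case True then show ?thesis using qj0 by simp
    next
      case False
      then obtain l where "sim ?j0 l" "sim l p" using \<open>apx ?j0 p\<close> by (auto simp: approx_def)
      then show ?thesis using sim_trans3 sim_sym qj0 by metis
    qed
  next
    assume "sim q p"
    then have "apx ?j0 p" using qj0 sim_sym j0 p by (auto simp: approx_def)
    then show "clsx ?j0 = clsx p" using cls_eq[OF j0 p] by simp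
  qed
  then show ?thesis using sb by simp
next
  case False
  then have "\<not> (\<exists>i\<in>clsx q. \<exists>j. sim i j)" using partner[OF q] by simp
  then have "sbar n ebar \<alpha> \<beta> D y k (clsx q, False) = (clsx q, True)"
    unfolding sbar_def by (simp only: fst_conv snd_conv if_False if_not_P)
  then show ?thesis using False by simp
qed

lemma cancel_char:
  assumes lam: "Lambda_ok n ebar \<alpha> \<beta> D y k \<Lambda>" and p: "p \<in> {1..n}" and q: "q \<in> {1..n}"
  defines "L \<equiv> \<lambda>v. toF n ebar \<alpha> \<beta> D y k \<Lambda> (clsx v, False)"
  shows "(fst (L p) = fst (L q) \<and> snd (L p) \<noteq> snd (L q)) = sim p q"
proof -
  let ?sb = "sbar n ebar \<alpha> \<beta> D y k"
  have Xp: "(clsx p, False) \<in> Sigma_w n ebar \<alpha> \<beta> D y k" using p by (auto simp: Sigma_w_def)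
  have Xq: "(clsx q, False) \<in> Sigma_w n ebar \<alpha> \<beta> D y k" using q by (auto simp: Sigma_w_def)
  have lp: "((clsx p, False) \<in> \<Lambda>) \<noteq> (?sb (clsx p, False) \<in> \<Lambda>)" using lam Xp by (simp add: Lambda_ok_def)
  have lq: "((clsx q, False) \<in> \<Lambda>) \<noteq> (?sb (clsx q, False) \<in> \<Lambda>)" using lam Xq by (simp add: Lambda_ok_def)
  have Lp: "L p = (if (clsx p, False) \<in> \<Lambda> then ((clsx p, False), True) else (?sb (clsx p, False), False))"
    by (simp add: L_def toF_def)
  have Lq: "L q = (if (clsx q, False) \<in> \<Lambda> then ((clsx q, False), True) else (?sb (clsx q, False), False))"
    by (simp add: L_def toF_def)
  have e1: "?sb (clsx q, False) = (clsx p, False) \<longleftrightarrow> sim q p" using sbar_eq[OF p q] .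
  have e2: "?sb (clsx p, False) = (clsx q, False) \<longleftrightarrow> sim p q" using sbar_eq[OF q p] .
  show ?thesis
  proof
    assume h: "fst (L p) = fst (L q) \<and> snd (L p) \<noteq> snd (L q)"
    show "sim p q"
    proof (cases "(clsx p, False) \<in> \<Lambda>")
      case True
      then have "(clsx q, False) \<notin> \<Lambda>" using h Lp Lq by (auto split: if_splits)
      then have "?sb (clsx q, False) = (clsx p, False)" using h Lp Lq True by simp
      then show ?thesis using e1 sim_sym by blast
    next
      case False
      then have "(clsx q, False) \<in> \<Lambda>" using h Lp Lq by (auto split: if_splits)
      then have "?sb (clsx p, False) = (clsx q, False)" using h Lp Lq False by simp
      then show ?thesis using e2 by blast
    qed
  next
    assume s: "sim p q"
    have s1: "?sb (clsx q, False) = (clsx p, False)" using e1 sim_sym[OF s] by simp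
    have s2: "?sb (clsx p, False) = (clsx q, False)" using e2 s by simp
    show "fst (L p) = fst (L q) \<and> snd (L p) \<noteq> snd (L q)"
      using Lp Lq lp s1 s2 by auto
  qed
qed

lemma main:
  assumes lam: "Lambda_ok n ebar \<alpha> \<beta> D y k \<Lambda>" and ij: "i \<le> j" and jn: "j \<le> n"
  shows "(\<exists>m::int. pres_eq (gbs_relators E \<iota> \<tau> ebar \<alpha> \<beta>) (wword a y k i j) (gpow (Inl (a i)) m))
     \<longleftrightarrow> pres_eq {} (map (toF n ebar \<alpha> \<beta> D y k \<Lambda>) (Cword n ebar \<alpha> \<beta> D y k i j)) []"
proof -
  define L where "L \<equiv> \<lambda>v. toF n ebar \<alpha> \<beta> D y k \<Lambda> (clsx v, False)"
  let ?st = "stk i j"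
  have inv: "okS i j ?st" "pres_eq Rel (wword a y k i j) (Rw i ?st)" using stk_inv[OF ij jn] by auto
  have ne: "?st \<noteq> []" using stk_ne[OF ij jn] .
  have ps: "map fst (butlast ?st) = fold pstep [Suc i..<Suc j] []" using stk_pos[OF ij jn] .
  have cw: "map (toF n ebar \<alpha> \<beta> D y k \<Lambda>) (Cword n ebar \<alpha> \<beta> D y k i j) = map L [Suc i..<Suc j]"
    by (simp add: Cword_def L_def)
  have rng: "\<forall>p\<in>set [] \<union> set [Suc i..<Suc j]. \<forall>q\<in>set [Suc i..<Suc j]. (fst (L p) = fst (L q) \<and> snd (L p) \<noteq> snd (L q)) = sim p q"
  proof (intro ballI)
    fix p q assume "p \<in> set [] \<union> set [Suc i..<Suc j]" "q \<in> set [Suc i..<Suc j]"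
    then have "p \<in> {1..n}" "q \<in> {1..n}" using jn by auto
    then show "(fst (L p) = fst (L q) \<and> snd (L p) \<noteq> snd (L q)) = sim p q"
      unfolding L_def by (rule cancel_char[OF lam])
  qed
  have "fold red_step (map L [Suc i..<Suc j]) (map L []) = map L (fold pstep [Suc i..<Suc j] [])"
    by (rule FR[OF rng])
  then have fr: "fold red_step (map L [Suc i..<Suc j]) [] = map L (map fst (butlast ?st))" using ps by simp
  have rhs: "pres_eq {} (map (toF n ebar \<alpha> \<beta> D y k \<Lambda>) (Cword n ebar \<alpha> \<beta> D y k i j)) [] \<longleftrightarrow> tl ?st = []"
  proof -
    have "pres_eq {} (map (toF n ebar \<alpha> \<beta> D y k \<Lambda>) (Cword n ebar \<alpha> \<beta> D y k i j)) [] \<longleftrightarrow>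
          fold red_step (map (toF n ebar \<alpha> \<beta> D y k \<Lambda>) (Cword n ebar \<alpha> \<beta> D y k i j)) [] = []"
      by (rule pres_eq_empty_iff)
    also have "\<dots> \<longleftrightarrow> map L (map fst (butlast ?st)) = []" by (simp only: cw fr)
    also have "\<dots> \<longleftrightarrow> butlast ?st = []" by simp
    also have "\<dots> \<longleftrightarrow> tl ?st = []" using ne by (cases ?st) (auto simp: butlast_conv_take)
    finally show ?thesis .
  qed
  show ?thesis
  proof (cases "tl ?st = []")
    case True
    then obtain x where x: "?st = [x]" using ne by (cases ?st) auto
    then obtain c where "?st = [(i, c)]" using inv(1) by (cases x) auto
    then have "Rw i ?st = gpow (Inl (a i)) c" by (simp add: Rw_def sgw_def)
    then show ?thesis using rhs True inv(2) by auto
  next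
    case False
    obtain c0 Ls where r: "Rw i ?st = gpow (Inl (a i)) c0 @ sw Ls" "redl Ls" "Ls \<noteq> []"
      using RWL[OF inv(1) jn] False by blast
    have "\<not> (\<exists>m::int. pres_eq Rel (wword a y k i j) (gpow (Inl (a i)) m))"
    proof
      assume "\<exists>m::int. pres_eq Rel (wword a y k i j) (gpow (Inl (a i)) m)"
      then obtain m where m: "pres_eq Rel (wword a y k i j) (gpow (Inl (a i)) m)" by blast
      have "pres_eq Rel (Rw i ?st) (gpow (Inl (a i)) m)"
        using pres_eq.pe_trans[OF pres_eq.pe_sym[OF inv(2)] m] .
      then show False using britton[OF r(2) r(3), of "a i" c0 m] r(1) by simp
    qed
    then show ?thesis using rhs False by simp
  qed
qed

end



theorem lemma3p6:
  fixes V :: "'v set" and E :: "'e set" and \<iota> \<tau> :: "'e \<Rightarrow> 'v" and ebar :: "'e \<Rightarrow> 'e"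
    and \<alpha> \<beta> :: "'e \<Rightarrow> int" and n :: nat and a :: "nat \<Rightarrow> 'v" and y :: "nat \<Rightarrow> 'e"
    and k :: "nat \<Rightarrow> int" and D :: "'e set" and \<Lambda> :: "(nat set \<times> bool) set" and i j :: nat
  assumes "gbs_graph V E \<iota> \<tau> ebar \<alpha> \<beta>"
    and "gbs_factorization V E \<iota> \<tau> n a y"
    and "orientation E ebar D"
    and "Lambda_ok n ebar \<alpha> \<beta> D y k \<Lambda>"
    and "i \<le> j" and "j \<le> n"
  shows "(\<exists>m::int. pres_eq (gbs_relators E \<iota> \<tau> ebar \<alpha> \<beta>) (wword a y k i j) (gpow (Inl (a i)) m))
     \<longleftrightarrow> pres_eq {} (map (toF n ebar \<alpha> \<beta> D y k \<Lambda>) (Cword n ebar \<alpha> \<beta> D y k i j)) []"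
proof -
  interpret G: gbsf V E \<iota> \<tau> ebar \<alpha> \<beta> n a y k D
    by (unfold_locales) (use assms in auto)
  show ?thesis using G.main[OF assms(4) assms(5) assms(6)] .
qed

end
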